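(* Let $k\in\mathbb{Z}^+$, let $G:\mathbb{R}\to\mathbb{R}$, and for real weights $\psi_1,\psi_2,\nu,\beta_i,\phi_{i,1},\phi_{i,2},\mu_i$ ($i=1,\dots,k$) let $g(y,e)=\nu+\sum_{i=1}^{k}\beta_iG(\phi_{i,1}y+\phi_{i,2}e+\mu_i)$. Consider the Markov chain $(x_t)$ on $\mathbb{R}^2$ defined by $$x_t=\Psi x_{t-1}+F(x_{t-1})+\Sigma\,\varepsilon_t,$$ where $x_t=(y_t,e_t)'$, $\Sigma=(1,1)'$, $\Psi=\begin{bmatrix}\psi_1&\psi_2\\0&0\end{bmatrix}$, $F(y,e)=(g(y,e),0)'$, and $(\varepsilon_t)$ is an i.i.d. sequence of real random variables. Assume: the distribution of $\varepsilon_t$ is absolutely continuous with respect to Lebesgue measure, with density positive everywhere on $\mathbb{R}$ and lower semi-continuous everywhere; $G\in C^\infty$ is bounded, nonconstant and asymptotically constant; $\psi_1+\psi_2\neq 0$; and $E|\varepsilon_t|<\infty$. Then a sufficient condition for $(x_t)$ to be geometrically ergodic is $|\psi_1|<1$.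
   Context: This chain is the state-space form of the PARNN$(1,k,1)$ process $y_t=\psi_1y_{t-1}+\psi_2e_{t-1}+g(y_{t-1},e_{t-1})+\varepsilon_t$. A Markov chain $(x_t)$ on $(\mathcal{X},\mathcal{B})$ with $t$-step transition probabilities $P^t(x,\cdot)$ is called geometrically ergodic if there exist a probability measure $\Pi$ on $(\mathcal{X},\mathcal{B})$ and a constant $\rho>1$ such that $\lim_{t\to\infty}\rho^t\|P^t(x,\cdot)-\Pi(\cdot)\|=0$ for each $x\in\mathcal{X}$, where $\|\cdot\|$ is the total variation norm; in that case the distribution of $x_t$ converges to $\Pi$ and $(x_t)$ is said to be asymptotically stationary. *)

theory Defs
  imports "HOL-Probability.Probability"
begin

definition lsc_real :: "(real \<Rightarrow> real) \<Rightarrow> bool" where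
  "lsc_real f \<longleftrightarrow> (\<forall>a. open {x. f x > a})"

definition smooth_real :: "(real \<Rightarrow> real) \<Rightarrow> bool" where
  "smooth_real G \<longleftrightarrow> (\<exists>D :: nat \<Rightarrow> real \<Rightarrow> real. D 0 = G \<and>
      (\<forall>n x. (D n has_real_derivative D (Suc n) x) (at x)))"

definition asymp_const :: "(real \<Rightarrow> real) \<Rightarrow> bool" where
  "asymp_const G \<longleftrightarrow> (\<exists>a b. (G \<longlongrightarrow> a) at_top \<and> (G \<longlongrightarrow> b) at_bot)"

definition parnn_g ::
  "(real \<Rightarrow> real) \<Rightarrow> nat \<Rightarrow> real \<Rightarrow> (nat \<Rightarrow> real) \<Rightarrow> (nat \<Rightarrow> real) \<Rightarrow> (nat \<Rightarrow> real)
    \<Rightarrow> (nat \<Rightarrow> real) \<Rightarrow> real \<Rightarrow> real \<Rightarrow> real" where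
  "parnn_g G k \<nu> \<beta> \<phi>1 \<phi>2 \<mu> y e = \<nu> + (\<Sum>i=1..k. \<beta> i * G (\<phi>1 i * y + \<phi>2 i * e + \<mu> i))"

text \<open>One step of the state-space recursion x_t = Psi x_{t-1} + F(x_{t-1}) + Sigma eps_t
  with Psi = [[psi1, psi2],[0,0]], F(y,e) = (g(y,e),0), Sigma = (1,1).\<close>
definition parnn_step ::
  "real \<Rightarrow> real \<Rightarrow> (real \<Rightarrow> real \<Rightarrow> real) \<Rightarrow> real \<times> real \<Rightarrow> real \<Rightarrow> real \<times> real" where
  "parnn_step \<psi>1 \<psi>2 g x \<epsilon> =
     (\<psi>1 * fst x + \<psi>2 * snd x + g (fst x) (snd x) + \<epsilon>, 0 * fst x + 0 * snd x + 0 + \<epsilon>)"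

definition trans_kernel ::
  "(real \<times> real \<Rightarrow> real \<Rightarrow> real \<times> real) \<Rightarrow> real measure \<Rightarrow> real \<times> real \<Rightarrow> (real \<times> real) measure" where
  "trans_kernel step D x = distr D borel (\<lambda>\<epsilon>. step x \<epsilon>)"

fun trans_iter ::
  "(real \<times> real \<Rightarrow> (real \<times> real) measure) \<Rightarrow> nat \<Rightarrow> real \<times> real \<Rightarrow> (real \<times> real) measure" where
  "trans_iter P 0 x = return borel x"
| "trans_iter P (Suc t) x = bind (trans_iter P t x) P"

text \<open>Total variation distance sup_A |M(A) - N(A)| over Borel sets (this is half
  the total variation norm of M - N; the factor is irrelevant for the limit below).\<close>
definition tv_dist :: "(real \<times> real) measure \<Rightarrow> (real \<times> real) measure \<Rightarrow> real" where
  "tv_dist M N = (SUP A \<in> sets (borel :: (real \<times> real) measure). \<bar>measure M A - measure N A\<bar>)"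

definition geometrically_ergodic :: "(real \<times> real \<Rightarrow> (real \<times> real) measure) \<Rightarrow> bool" where
  "geometrically_ergodic P \<longleftrightarrow>
     (\<exists>Pinv :: (real \<times> real) measure. prob_space Pinv \<and> sets Pinv = sets borel \<and>
        (\<exists>\<rho>::real. \<rho> > 1 \<and>
           (\<forall>x. (\<lambda>t. \<rho> ^ t * tv_dist (trans_iter P t x) Pinv) \<longlonglongrightarrow> 0)))"

end

theory Submission
  imports Defs "HOL-Probability.Probability"
begin


lemma harris_step:
  fixes Q :: "'a \<Rightarrow> 'a measure" and V \<psi> :: "'a \<Rightarrow> real" and \<nu> :: "'a measure"
  assumes Qprob: "\<And>x. prob_space (Q x)" and Qsets: "\<And>x. sets (Q x) = sets SM"
    and nuprob: "prob_space \<nu>" and nusets: "sets \<nu> = sets SM"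
    and Vmeas: "V \<in> borel_measurable SM" and Vnn: "\<And>x. 0 \<le> V x"
    and VintQ: "\<And>x. integrable (Q x) V" and Vintnu: "integrable \<nu> V"
    and drift: "\<And>x. (\<integral>y. V y \<partial>Q x) \<le> \<gamma> * V x + K"
    and minor: "\<And>x F. V x \<le> R \<Longrightarrow> F \<in> borel_measurable SM \<Longrightarrow> (\<And>y. 0 \<le> F y) \<Longrightarrow>
        integrable (Q x) F \<Longrightarrow> integrable \<nu> F \<Longrightarrow> (\<integral>y. F y \<partial>Q x) \<ge> \<alpha> * (\<integral>y. F y \<partial>\<nu>)"
    and psimeas: "\<psi> \<in> borel_measurable SM" and psibd: "\<And>y. \<bar>\<psi> y\<bar> \<le> B\<psi>"
    and Lip: "\<And>u v. \<bar>\<psi> u - \<psi> v\<bar> \<le> L * (2 + \<beta> * V u + \<beta> * V v)"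
    and L0: "0 \<le> L"
    and g0: "0 \<le> \<gamma>" and g1: "\<gamma> < 1" and K0: "0 \<le> K" and a0: "0 < \<alpha>" and a1: "\<alpha> \<le> 1"
    and Rdef: "R = 2 * (4 * K + 1) / (1 - \<gamma>)"
    and bdef: "\<beta> = min 1 (\<alpha> / (\<gamma> * R + 2 * K + 1))"
    and abdef: "ab = max ((1 + \<gamma>) / 2) (max (1 - \<beta> / 2) (1 - \<alpha> / 2))"
  shows "\<bar>(\<integral>y. \<psi> y \<partial>Q x) - (\<integral>y. \<psi> y \<partial>Q x')\<bar> \<le> ab * L * (2 + \<beta> * V x + \<beta> * V x')"
proof -
  have R0: "R > 0" using Rdef g1 K0 by auto
  have p0: "\<gamma> * R + 2 * K + 1 > 0" using R0 g0 K0 by (simp add: add_nonneg_pos)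
  have b0: "\<beta> > 0" using bdef a0 p0 by auto
  have b1: "\<beta> \<le> 1" using bdef by auto
  have bR: "\<beta> * (\<gamma> * R + 2 * K) \<le> \<alpha>"
  proof -
    have p: "\<gamma> * R + 2 * K + 1 > 0" using R0 g0 K0 by (simp add: add_nonneg_pos)
    have "\<beta> \<le> \<alpha> / (\<gamma> * R + 2 * K + 1)" using bdef by simp
    hence "\<beta> * (\<gamma> * R + 2 * K + 1) \<le> \<alpha>" using p by (simp add: pos_le_divide_eq)
    moreover have "\<beta> * (\<gamma> * R + 2 * K) \<le> \<beta> * (\<gamma> * R + 2 * K + 1)" using b0 by simp
    ultimately show ?thesis by linarith
  qed
  define W where "W y = L * (1 + \<beta> * V y)" for y
  have W0: "W y \<ge> 0" for y using L0 b0 Vnn[of y] by (simp add: W_def)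
  define c where "c = - (SUP u. \<psi> u - W u)"
  have bddA: "bdd_above (range (\<lambda>u. \<psi> u - W u))"
  proof (rule bdd_aboveI[where M=B\<psi>])
    fix x assume "x \<in> range (\<lambda>u. \<psi> u - W u)"
    then obtain u where "x = \<psi> u - W u" by auto
    moreover have "\<psi> u \<le> B\<psi>" using psibd[of u] by simp
    ultimately show "x \<le> B\<psi>" using W0[of u] by simp
  qed
  have up: "\<psi> u + c \<le> W u" for u
    using cSUP_upper[OF _ bddA, of u] unfolding c_def by auto
  have lo: "- W v \<le> \<psi> v + c" for v
  proof -
    have "(SUP u. \<psi> u - W u) \<le> \<psi> v + W v"
    proof (rule cSUP_least)
      fix u show "\<psi> u - W u \<le> \<psi> v + W v"
        using Lip[of u v] by (auto simp: W_def algebra_simps abs_le_iff)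
    qed simp
    then show ?thesis unfolding c_def by simp
  qed
  define \<psi>' where "\<psi>' y = \<psi> y + c" for y
  have [measurable]: "\<psi>' \<in> borel_measurable SM" unfolding \<psi>'_def using psimeas by measurable
  have [measurable]: "W \<in> borel_measurable SM" unfolding W_def using Vmeas by measurable
  have absp: "\<bar>\<psi>' y\<bar> \<le> W y" for y using up[of y] lo[of y] by (simp add: \<psi>'_def abs_le_iff)
  have intp: "integrable M \<psi>'" if "prob_space M" "sets M = sets SM" for M
  proof -
    interpret prob_space M by fact
    have m: "\<psi>' \<in> borel_measurable M" using measurable_cong_sets[OF that(2) refl] \<open>\<psi>' \<in> borel_measurable SM\<close> by metis
    have b: "\<bar>\<psi>' y\<bar> \<le> B\<psi> + \<bar>c\<bar>" for y
      using psibd[of y] abs_triangle_ineq[of "\<psi> y" c] unfolding \<psi>'_def by linarith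
    show ?thesis
      by (rule integrable_const_bound[where B="B\<psi> + \<bar>c\<bar>"]) (use b m in auto)
  qed
  have intW: "integrable M W" if "prob_space M" "sets M = sets SM" "integrable M V" for M
  proof -
    interpret prob_space M by fact
    show ?thesis unfolding W_def using that(3) by auto
  qed
  have shift: "(\<integral>y. \<psi>' y \<partial>Q z) = (\<integral>y. \<psi> y \<partial>Q z) + c" for z
  proof -
    interpret prob_space "Q z" by (rule Qprob)
    have "integrable (Q z) \<psi>" 
    proof -
      have "integrable (Q z) (\<lambda>y. \<psi>' y - c)" using intp[OF Qprob Qsets] by auto
      then show ?thesis by (simp add: \<psi>'_def)
    qed
    then show ?thesis unfolding \<psi>'_def by (simp add: prob_space)
  qed
  have intWQ: "(\<integral>y. W y \<partial>Q z) = L + L * \<beta> * (\<integral>y. V y \<partial>Q z)" for z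
  proof -
    interpret prob_space "Q z" by (rule Qprob)
    show ?thesis unfolding W_def using VintQ[of z] by (simp add: prob_space distrib_left)
  qed
  have intWnu: "(\<integral>y. W y \<partial>\<nu>) = L + L * \<beta> * (\<integral>y. V y \<partial>\<nu>)"
  proof -
    interpret prob_space "\<nu>" by (rule nuprob)
    show ?thesis unfolding W_def using Vintnu by (simp add: prob_space distrib_left)
  qed
  have Vnu0: "(\<integral>y. V y \<partial>\<nu>) \<ge> 0" using Vnn by (simp add: integral_nonneg_AE)
  have boundQ: "\<bar>(\<integral>y. \<psi>' y \<partial>Q z)\<bar> \<le> L + L * \<beta> * (\<integral>y. V y \<partial>Q z)" for z
  proof -
    have "\<bar>(\<integral>y. \<psi>' y \<partial>Q z)\<bar> \<le> (\<integral>y. \<bar>\<psi>' y\<bar> \<partial>Q z)" by (rule integral_abs_bound)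
    also have "\<dots> \<le> (\<integral>y. W y \<partial>Q z)"
      by (rule integral_mono) (use intp[OF Qprob Qsets] intW[OF Qprob Qsets VintQ] absp in auto)
    finally show ?thesis using intWQ by simp
  qed
  have driftL: "L * \<beta> * (\<integral>y. V y \<partial>Q z) \<le> L * \<beta> * (\<gamma> * V z + K)" for z
    using drift[of z] L0 b0 by (simp add: mult_left_mono)
  have small: "\<bar>(\<integral>y. \<psi>' y \<partial>Q z) - \<alpha> * (\<integral>y. \<psi>' y \<partial>\<nu>)\<bar> \<le> L * (1 - \<alpha>) + L * \<beta> * (\<integral>y. V y \<partial>Q z)"
    if "V z \<le> R" for z
  proof -
    have iQ: "integrable (Q z) \<psi>'" by (rule intp[OF Qprob Qsets])
    have inu: "integrable \<nu> \<psi>'" by (rule intp[OF nuprob nusets])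
    have wQ: "integrable (Q z) W" by (rule intW[OF Qprob Qsets VintQ])
    have wnu: "integrable \<nu> W" by (rule intW[OF nuprob nusets Vintnu])
    have m1: "(\<integral>y. W y - \<psi>' y \<partial>Q z) \<ge> \<alpha> * (\<integral>y. W y - \<psi>' y \<partial>\<nu>)"
      by (rule minor[OF that]) (use absp iQ inu wQ wnu in \<open>auto simp: abs_le_iff\<close>)
    have absp2: "0 \<le> W y + \<psi>' y" for y using absp[of y] by (simp add: abs_le_iff)
    have m2: "(\<integral>y. W y + \<psi>' y \<partial>Q z) \<ge> \<alpha> * (\<integral>y. W y + \<psi>' y \<partial>\<nu>)"
      by (rule minor[OF that]) (use absp2 iQ inu wQ wnu in \<open>auto\<close>)
    have e1: "(\<integral>y. W y - \<psi>' y \<partial>Q z) = (\<integral>y. W y \<partial>Q z) - (\<integral>y. \<psi>' y \<partial>Q z)" using iQ wQ by simp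
    have e2: "(\<integral>y. W y - \<psi>' y \<partial>\<nu>) = (\<integral>y. W y \<partial>\<nu>) - (\<integral>y. \<psi>' y \<partial>\<nu>)" using inu wnu by simp
    have e3: "(\<integral>y. W y + \<psi>' y \<partial>Q z) = (\<integral>y. W y \<partial>Q z) + (\<integral>y. \<psi>' y \<partial>Q z)" using iQ wQ by simp
    have e4: "(\<integral>y. W y + \<psi>' y \<partial>\<nu>) = (\<integral>y. W y \<partial>\<nu>) + (\<integral>y. \<psi>' y \<partial>\<nu>)" using inu wnu by simp
    have pos: "\<alpha> * (L * \<beta> * (\<integral>y. V y \<partial>\<nu>)) \<ge> 0" using a0 L0 b0 Vnu0 by simp
    show ?thesis using m1 m2 e1 e2 e3 e4 intWQ[of z] intWnu pos
      by (simp add: abs_le_iff algebra_simps)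
  qed
  show ?thesis
  proof (cases "V x + V x' \<ge> R")
    case True
    have "\<bar>(\<integral>y. \<psi> y \<partial>Q x) - (\<integral>y. \<psi> y \<partial>Q x')\<bar> = \<bar>(\<integral>y. \<psi>' y \<partial>Q x) - (\<integral>y. \<psi>' y \<partial>Q x')\<bar>"
      by (simp add: shift)
    also have "\<dots> \<le> (L + L * \<beta> * (\<gamma> * V x + K)) + (L + L * \<beta> * (\<gamma> * V x' + K))"
      using boundQ[of x] boundQ[of x'] driftL[of x] driftL[of x'] by linarith
    also have "\<dots> \<le> ab * L * (2 + \<beta> * V x + \<beta> * V x')"
    proof -
      have abg: "ab \<ge> (1 + \<gamma>) / 2" and abb: "ab \<ge> 1 - \<beta> / 2" using abdef by auto
      define S where "S = V x + V x'"
      have SR: "S \<ge> R" using True S_def by simp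
      have "R * (1 - \<gamma>) / 2 = 4 * K + 1" using Rdef g1 by (simp add: field_simps)
      hence RS: "S * (1 - \<gamma>) / 2 \<ge> 4 * K + 1" using SR g1
        by (smt (verit) divide_right_mono mult_right_mono)
      have "2 + \<beta> * \<gamma> * S + 2 * \<beta> * K \<le> ab * (2 + \<beta> * S)"
      proof -
        have "ab * (2 + \<beta> * S) - (2 + \<beta> * \<gamma> * S + 2 * \<beta> * K) = 2 * (ab - 1) + \<beta> * S * (ab - \<gamma>) - 2 * \<beta> * K"
          by (simp add: algebra_simps)
        also have "\<dots> \<ge> - \<beta> + \<beta> * (S * (1 - \<gamma>) / 2) - 2 * \<beta> * K"
        proof -
          have "2 * (ab - 1) \<ge> - \<beta>" using abb by simp
          moreover have "\<beta> * S * (ab - \<gamma>) \<ge> \<beta> * (S * (1 - \<gamma>) / 2)"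
          proof -
            have "S \<ge> 0" using SR R0 by simp
            moreover have "ab - \<gamma> \<ge> (1 - \<gamma>) / 2" using abg by simp
            ultimately have "S * (ab - \<gamma>) \<ge> S * ((1 - \<gamma>) / 2)" by (intro mult_left_mono)
            then show ?thesis using b0 by (simp add: mult_left_mono mult.assoc)
          qed
          ultimately show ?thesis by linarith
        qed
        finally have "ab * (2 + \<beta> * S) - (2 + \<beta> * \<gamma> * S + 2 * \<beta> * K) \<ge> - \<beta> + \<beta> * (S * (1 - \<gamma>) / 2) - 2 * \<beta> * K" .
        moreover have "\<beta> * (S * (1 - \<gamma>) / 2) \<ge> \<beta> * (4 * K + 1)" using RS b0 by (simp add: mult_left_mono)
        moreover have "\<beta> * K \<ge> 0" using b0 K0 by simp
        moreover have "\<beta> * (4 * K + 1) = 4 * (\<beta> * K) + \<beta>" "2 * \<beta> * K = 2 * (\<beta> * K)" by (simp_all add: algebra_simps)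
        ultimately show ?thesis by linarith
      qed
      hence "L * (2 + \<beta> * \<gamma> * S + 2 * \<beta> * K) \<le> L * (ab * (2 + \<beta> * S))" using L0 by (simp add: mult_left_mono)
      then show ?thesis unfolding S_def by (simp add: algebra_simps)
    qed
    finally show ?thesis .
  next
    case False
    have Vx: "V x \<le> R" and Vx': "V x' \<le> R" using False Vnn[of x] Vnn[of x'] by linarith+
    have "\<bar>(\<integral>y. \<psi> y \<partial>Q x) - (\<integral>y. \<psi> y \<partial>Q x')\<bar> = \<bar>(\<integral>y. \<psi>' y \<partial>Q x) - (\<integral>y. \<psi>' y \<partial>Q x')\<bar>"
      by (simp add: shift)
    also have "\<dots> \<le> (L * (1 - \<alpha>) + L * \<beta> * (\<gamma> * V x + K)) + (L * (1 - \<alpha>) + L * \<beta> * (\<gamma> * V x' + K))"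
      using small[OF Vx] small[OF Vx'] driftL[of x] driftL[of x'] by linarith
    also have "\<dots> = L * (2 * (1 - \<alpha>) + \<beta> * (\<gamma> * (V x + V x') + 2 * K))" by (simp add: algebra_simps)
    also have "\<dots> \<le> L * (2 * (1 - \<alpha>) + \<alpha>)"
    proof -
      have "\<beta> * (\<gamma> * (V x + V x') + 2 * K) \<le> \<beta> * (\<gamma> * R + 2 * K)"
        using False g0 b0 by (intro mult_left_mono) (auto intro: mult_left_mono)
      then show ?thesis using bR L0 by (intro mult_left_mono) auto
    qed
    also have "\<dots> \<le> ab * L * (2 + \<beta> * V x + \<beta> * V x')"
    proof -
      have aba: "ab \<ge> 1 - \<alpha> / 2" using abdef by auto
      have "2 * (1 - \<alpha>) + \<alpha> \<le> ab * 2" using aba by simp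
      also have "\<dots> \<le> ab * (2 + \<beta> * V x + \<beta> * V x')"
        using aba a1 b0 Vnn[of x] Vnn[of x'] by (intro mult_left_mono) auto
      finally show ?thesis using L0 by (simp add: mult_left_mono mult.assoc mult.left_commute)
    qed
    finally show ?thesis .
  qed
qed


lemma mvt_bound:
  fixes g g' :: "real \<Rightarrow> real"
  assumes "a \<le> b" and d: "\<And>x. a \<le> x \<Longrightarrow> x \<le> b \<Longrightarrow> (g has_real_derivative g' x) (at x)"
    and K: "\<And>x. a \<le> x \<Longrightarrow> x \<le> b \<Longrightarrow> \<bar>g' x\<bar> \<le> K"
  shows "\<bar>g b - g a\<bar> \<le> K * (b - a)"
proof (cases "a = b")
  case True then show ?thesis by simp
next
  case False
  then have "a < b" using assms(1) by simp
  from MVT2[OF this d] obtain z where z: "a < z" "z < b" "g b - g a = (b - a) * g' z" by blast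
  have "\<bar>g b - g a\<bar> = (b - a) * \<bar>g' z\<bar>" using z \<open>a < b\<close> by (simp add: abs_mult)
  also have "\<dots> \<le> (b - a) * K" using K[of z] z \<open>a < b\<close> by (intro mult_left_mono) auto
  finally show ?thesis by (simp add: mult.commute)
qed

lemma mvt_lower:
  fixes g g' :: "real \<Rightarrow> real"
  assumes "a \<le> b" and d: "\<And>x. a \<le> x \<Longrightarrow> x \<le> b \<Longrightarrow> (g has_real_derivative g' x) (at x)"
    and K: "\<And>x. a \<le> x \<Longrightarrow> x \<le> b \<Longrightarrow> \<kappa> \<le> g' x"
  shows "\<kappa> * (b - a) \<le> g b - g a"
proof (cases "a = b")
  case True then show ?thesis by simp
next
  case False
  then have "a < b" using assms(1) by simp
  from MVT2[OF this d] obtain z where z: "a < z" "z < b" "g b - g a = (b - a) * g' z" by blast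
  have "(b - a) * \<kappa> \<le> (b - a) * g' z" using K[of z] z \<open>a < b\<close> by (intro mult_left_mono) auto
  then show ?thesis using z by (simp add: mult.commute)
qed

lemma lsc_min:
  fixes f :: "real \<Rightarrow> real"
  assumes lsc: "lsc_real f" and pos: "\<And>x. f x > 0"
  shows "\<exists>m>0. \<forall>x\<in>{a..b}. m \<le> f x"
proof -
  define U where "U n = {x. f x > 1 / real (Suc n)}" for n
  have opn: "open (U n)" for n using lsc unfolding lsc_real_def U_def by blast
  have cov: "{a..b} \<subseteq> (\<Union>n\<in>UNIV. U n)"
  proof
    fix x assume "x \<in> {a..b}"
    obtain n where "1 / real (Suc n) < f x" using pos[of x] by (metis nat_approx_posE)
    then show "x \<in> (\<Union>n\<in>UNIV. U n)" by (auto simp: U_def)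
  qed
  obtain C' where C': "C' \<subseteq> UNIV" "finite C'" "{a..b} \<subseteq> (\<Union>n\<in>C'. U n)"
    using compactE_image[OF compact_Icc opn cov] by blast
  define N where "N = Max (insert 0 C')"
  have mono: "U n \<subseteq> U N" if "n \<in> C'" for n
  proof -
    have "n \<le> N" unfolding N_def using C'(2) that by simp
    then have "1 / real (Suc N) \<le> 1 / real (Suc n)" by (simp add: frac_le)
    then show ?thesis unfolding U_def by auto
  qed
  have "\<forall>x\<in>{a..b}. 1 / real (Suc N) \<le> f x"
  proof
    fix x assume "x \<in> {a..b}"
    then obtain n where "n \<in> C'" "x \<in> U n" using C'(3) by blast
    then have "x \<in> U N" using mono by blast
    then show "1 / real (Suc N) \<le> f x" by (simp add: U_def)
  qed
  then show ?thesis by (intro exI[of _ "1 / real (Suc N)"]) auto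
qed

lemma subst_lower:
  fixes g g' fw :: "real \<Rightarrow> real" and \<Psi> :: "real \<Rightarrow> ennreal"
  assumes ab: "a < b"
    and deriv: "\<And>x. x \<in> {a..b} \<Longrightarrow> (g has_real_derivative g' x) (at x)"
    and cont: "continuous_on {a..b} g'"
    and g'nn: "\<And>x. x \<in> {a..b} \<Longrightarrow> 0 \<le> g' x"
    and g'K: "\<And>x. x \<in> {a..b} \<Longrightarrow> g' x \<le> Kd" and Kd: "Kd > 0"
    and fwm: "\<And>x. x \<in> {a..b} \<Longrightarrow> m \<le> fw x" and m0: "m \<ge> 0"
    and Pm[measurable]: "\<Psi> \<in> borel_measurable borel"
    and sub: "{p..q} \<subseteq> {g a..g b}"
  shows "ennreal (m / Kd) * (\<integral>\<^sup>+v. \<Psi> v * indicator {p..q} v \<partial>lborel) \<le> (\<integral>\<^sup>+x. ennreal (fw x) * \<Psi> (g x) \<partial>lborel)"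
proof -
  define \<Psi>' where "\<Psi>' v = ennreal (m / Kd) * \<Psi> v" for v
  have [measurable]: "\<Psi>' \<in> borel_measurable borel" unfolding \<Psi>'_def by measurable
  have "ennreal (m / Kd) * (\<integral>\<^sup>+v. \<Psi> v * indicator {p..q} v \<partial>lborel) = (\<integral>\<^sup>+v. \<Psi>' v * indicator {p..q} v \<partial>lborel)"
    unfolding \<Psi>'_def by (subst nn_integral_cmult[symmetric]) (auto simp: mult.assoc)
  also have "\<dots> \<le> (\<integral>\<^sup>+v. \<Psi>' v * indicator {g a..g b} v \<partial>lborel)"
    by (rule nn_integral_mono) (use sub in \<open>auto simp: indicator_def\<close>)
  also have "\<dots> = (\<integral>\<^sup>+x. \<Psi>' (g x) * g' x * indicator {a..b} x \<partial>lborel)"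
    by (rule nn_integral_substitution_aux[OF _ _ deriv cont g'nn ab]) auto
  also have "\<dots> \<le> (\<integral>\<^sup>+x. ennreal (fw x) * \<Psi> (g x) \<partial>lborel)"
  proof (rule nn_integral_mono)
    fix x
    show "\<Psi>' (g x) * ennreal (g' x) * indicator {a..b} x \<le> ennreal (fw x) * \<Psi> (g x)"
    proof (cases "x \<in> {a..b}")
      case True
      have "m / Kd * g' x \<le> m / Kd * Kd" using g'K[OF True] m0 Kd by (intro mult_left_mono) auto
      also have "\<dots> = m" using Kd by simp
      also have "\<dots> \<le> fw x" by (rule fwm[OF True])
      finally have le: "m / Kd * g' x \<le> fw x" .
      have "\<Psi>' (g x) * ennreal (g' x) = ennreal (m / Kd * g' x) * \<Psi> (g x)"
      proof -
        have "ennreal (m / Kd * g' x) = ennreal (m / Kd) * ennreal (g' x)"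
          using m0 Kd g'nn[OF True] by (intro ennreal_mult) auto
        then show ?thesis unfolding \<Psi>'_def by (simp add: mult_ac)
      qed
      also have "\<dots> \<le> ennreal (fw x) * \<Psi> (g x)"
        using le by (intro mult_right_mono ennreal_leI) auto
      finally show ?thesis using True by simp
    qed simp
  qed
  finally show ?thesis .
qed

lemma nn_reflect:
  fixes H :: "real \<Rightarrow> ennreal"
  assumes [measurable]: "H \<in> borel_measurable borel"
  shows "(\<integral>\<^sup>+x. H x \<partial>lborel) = (\<integral>\<^sup>+x. H (- x) \<partial>lborel)"
proof -
  have "(\<integral>\<^sup>+x. H x \<partial>lborel) = (\<integral>\<^sup>+x. H x \<partial>distr lborel borel uminus)"
    by (simp add: lborel_distr_uminus)
  also have "\<dots> = (\<integral>\<^sup>+x. H (- x) \<partial>lborel)"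
    by (subst nn_integral_distr) auto
  finally show ?thesis .
qed


locale parnn =
  fixes \<psi>1 \<psi>2 :: real and gf :: "real \<Rightarrow> real \<Rightarrow> real" and gd :: "real \<Rightarrow> real \<Rightarrow> real"
    and f :: "real \<Rightarrow> real" and D :: "real measure" and Bg :: real
  assumes D_def: "D = density lborel (\<lambda>e. ennreal (f e))"
    and f_meas: "f \<in> borel_measurable borel"
    and D_prob: "prob_space D"
    and f_pos: "\<And>e. f e > 0"
    and f_lsc: "lsc_real f"
    and gf_cont: "continuous_on UNIV (\<lambda>p. gf (fst p) (snd p))"
    and gf_bound: "\<And>y e. \<bar>gf y e\<bar> \<le> Bg"
    and gf_deriv: "\<And>w t. ((\<lambda>t. gf (w + t) t) has_real_derivative gd w t) (at t)"
    and gd_cont: "continuous_on UNIV (\<lambda>p. gd (fst p) (snd p))"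
    and psi_sum: "\<psi>1 + \<psi>2 \<noteq> 0"
    and eps_mean: "integrable D (\<lambda>e. \<bar>e\<bar>)"
    and psi1: "\<bar>\<psi>1\<bar> < 1"
begin

definition hh :: "real \<times> real \<Rightarrow> real" where
  "hh x = \<psi>1 * fst x + \<psi>2 * snd x + gf (fst x) (snd x)"

definition PP :: "real \<times> real \<Rightarrow> (real \<times> real) measure" where
  "PP = trans_kernel (parnn_step \<psi>1 \<psi>2 gf) D"

lemma step_eq: "parnn_step \<psi>1 \<psi>2 gf x e = (hh x + e, e)"
  by (simp add: parnn_step_def hh_def)

lemma PP_eq: "PP x = distr D borel (\<lambda>e. (hh x + e, e))"
  by (simp add: PP_def trans_kernel_def step_eq)

lemma sets_D[measurable_cong]: "sets D = sets borel"
  by (simp add: D_def)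

lemma space_D: "space D = UNIV"
  by (simp add: D_def)

lemma gf_meas[measurable]: "(\<lambda>p. gf (fst p) (snd p)) \<in> borel_measurable borel"
  using gf_cont by (intro borel_measurable_continuous_onI) 

lemma gf_cont': "continuous_on S (\<lambda>p. gf (fst p) (snd p))"
  using gf_cont continuous_on_subset by blast

lemma hh_cont: "continuous_on UNIV hh"
  unfolding hh_def by (intro continuous_intros gf_cont')

lemma hh_meas[measurable]: "hh \<in> borel_measurable borel"
  by (rule borel_measurable_continuous_onI[OF hh_cont])

lemma PP_meas[measurable]: "PP \<in> borel \<rightarrow>\<^sub>M prob_algebra borel"
proof -
  have "(\<lambda>x. distr D borel (\<lambda>e. (hh x + e, e))) \<in> borel \<rightarrow>\<^sub>M prob_algebra borel"
  proof (rule measurable_distr_prob_space2[where M=borel])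
    show "(\<lambda>x. D) \<in> (borel :: (real\<times>real) measure) \<rightarrow>\<^sub>M prob_algebra borel"
      using D_prob by (auto simp: space_prob_algebra sets_D)
    show "(\<lambda>(x, y). (hh x + y, y)) \<in> (borel :: (real\<times>real) measure) \<Otimes>\<^sub>M (borel::real measure) \<rightarrow>\<^sub>M borel"
      by measurable
  qed
  then show ?thesis by (simp add: PP_eq[abs_def])
qed

lemma PP_prob: "prob_space (PP x)"
  using measurable_space[OF PP_meas, of x] by (simp add: space_prob_algebra)

lemma sets_PP[simp]: "sets (PP x) = sets borel"
  using measurable_space[OF PP_meas, of x] by (simp add: space_prob_algebra)

abbreviation TI where "TI \<equiv> trans_iter PP"

lemma TI_meas[measurable]: "TI n \<in> borel \<rightarrow>\<^sub>M prob_algebra borel"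
proof (induction n)
  case 0
  then show ?case by (simp add: measurable_return_prob_space[unfolded comp_def] )
next
  case (Suc n)
  have "(\<lambda>x. TI n x \<bind> PP) \<in> borel \<rightarrow>\<^sub>M prob_algebra borel"
    by (rule measurable_bind_prob_space[OF Suc PP_meas])
  then show ?case by simp
qed

lemma TI_prob: "prob_space (TI n x)"
  using measurable_space[OF TI_meas, of x n] by (simp add: space_prob_algebra)

lemma sets_TI[simp]: "sets (TI n x) = sets borel"
  using measurable_space[OF TI_meas, of x n] by (simp add: space_prob_algebra)

lemma space_TI[simp]: "space (TI n x) = UNIV"
  using sets_eq_imp_space_eq[OF sets_TI] by simp

lemma emeasure_TI_UNIV[simp]: "emeasure (TI n x) UNIV = 1"
  using prob_space.emeasure_space_1[OF TI_prob[of n x]] by simp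

lemma measure_TI_UNIV[simp]: "measure (TI n x) UNIV = 1"
  using prob_space.prob_space[OF TI_prob[of n x]] by simp

lemma space_PP[simp]: "space (PP x) = UNIV"
  using sets_eq_imp_space_eq[OF sets_PP] by simp

lemma nn_TI_Suc:
  fixes F :: "real \<times> real \<Rightarrow> ennreal"
  assumes [measurable]: "F \<in> borel_measurable borel"
  shows "(\<integral>\<^sup>+y. F y \<partial>TI (Suc n) x) = (\<integral>\<^sup>+z. (\<integral>\<^sup>+y. F y \<partial>PP z) \<partial>TI n x)"
proof -
  have "PP \<in> TI n x \<rightarrow>\<^sub>M subprob_algebra borel" using [[show_types]]
    using measurable_prob_algebraD[OF PP_meas] measurable_cong_sets[OF sets_TI refl, of n x "subprob_algebra borel"] by metis
  then show ?thesis unfolding trans_iter.simps by (rule nn_integral_bind[OF assms])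
qed

lemma PP_meas_sub[measurable]: "PP \<in> borel \<rightarrow>\<^sub>M subprob_algebra borel"
  by (rule measurable_prob_algebraD[OF PP_meas])

lemma TI_meas_sub[measurable]: "TI n \<in> borel \<rightarrow>\<^sub>M subprob_algebra borel"
  by (rule measurable_prob_algebraD[OF TI_meas])

lemma meas_TI: "F \<in> borel_measurable borel \<Longrightarrow> F \<in> borel_measurable (TI n x)"
  using measurable_cong_sets[OF sets_TI[of n x] refl, of "borel::'b::topological_space measure"] by metis

lemma meas_PP: "F \<in> borel_measurable borel \<Longrightarrow> F \<in> borel_measurable (PP x)"
  using measurable_cong_sets[OF sets_PP[of x] refl, of "borel::'b::topological_space measure"] by metis

definition Pop :: "(real \<times> real \<Rightarrow> real) \<Rightarrow> real \<times> real \<Rightarrow> real" where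
  "Pop \<phi> x = (\<integral>y. \<phi> y \<partial>PP x)"

definition bnn :: "real \<Rightarrow> (real \<times> real \<Rightarrow> real) \<Rightarrow> bool" where
  "bnn B \<phi> \<longleftrightarrow> \<phi> \<in> borel_measurable borel \<and> (\<forall>x. 0 \<le> \<phi> x \<and> \<phi> x \<le> B)"

lemma bnn_integrable:
  assumes "bnn B \<phi>" "prob_space M" "sets M = sets borel"
  shows "integrable M \<phi>"
proof -
  interpret prob_space M by fact
  have m0: "\<phi> \<in> borel_measurable borel" using assms(1) by (simp add: bnn_def)
  have m: "\<phi> \<in> borel_measurable M" using m0 measurable_cong_sets[OF assms(3) refl, of "borel::real measure"] by metis
  show ?thesis
    by (rule integrable_const_bound[where B=B]) (use assms(1) m in \<open>auto simp: bnn_def\<close>)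
qed

lemma Pop_meas: "\<phi> \<in> borel_measurable borel \<Longrightarrow> Pop \<phi> \<in> borel_measurable borel"
  unfolding Pop_def
  by (rule measurable_compose[OF PP_meas_sub integral_measurable_subprob_algebra])

lemma Pop_bnn: assumes "bnn B \<phi>" shows "bnn B (Pop \<phi>)"
proof -
  have "0 \<le> Pop \<phi> x \<and> Pop \<phi> x \<le> B" for x
  proof -
    interpret prob_space "PP x" by (rule PP_prob)
    have i: "integrable (PP x) \<phi>" by (rule bnn_integrable[OF assms PP_prob sets_PP])
    have "0 \<le> Pop \<phi> x" unfolding Pop_def using assms by (auto simp: bnn_def intro!: integral_nonneg_AE)
    moreover have "Pop \<phi> x \<le> (\<integral>y. B \<partial>PP x)" unfolding Pop_def
      by (rule integral_mono[OF i]) (use assms in \<open>auto simp: bnn_def\<close>)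
    ultimately show ?thesis using prob_space by simp
  qed
  then show ?thesis using assms Pop_meas by (auto simp: bnn_def)
qed

lemma int_TI_Suc:
  assumes "bnn B \<phi>"
  shows "(\<integral>y. \<phi> y \<partial>TI (Suc n) x) = (\<integral>y. Pop \<phi> y \<partial>TI n x)"
proof -
  have m[measurable]: "\<phi> \<in> borel_measurable borel" using assms by (simp add: bnn_def)
  have nn: "\<And>y. 0 \<le> \<phi> y" using assms unfolding bnn_def by blast
  have pn: "\<And>y. 0 \<le> Pop \<phi> y" using Pop_bnn[OF assms] unfolding bnn_def by blast
  have eq: "(\<integral>\<^sup>+y. ennreal (\<phi> y) \<partial>PP z) = ennreal (Pop \<phi> z)" for z
    unfolding Pop_def
    by (rule nn_integral_eq_integral[OF bnn_integrable[OF assms PP_prob sets_PP]]) (simp add: nn)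
  have "(\<integral>y. \<phi> y \<partial>TI (Suc n) x) = enn2real (\<integral>\<^sup>+y. ennreal (\<phi> y) \<partial>TI (Suc n) x)"
    by (rule integral_eq_nn_integral) (auto simp: nn)
  also have "\<dots> = enn2real (\<integral>\<^sup>+z. ennreal (Pop \<phi> z) \<partial>TI n x)"
    by (subst nn_TI_Suc) (auto simp: eq)
  also have "\<dots> = (\<integral>y. Pop \<phi> y \<partial>TI n x)"
    by (rule integral_eq_nn_integral[symmetric]) (auto simp: pn intro: meas_TI Pop_meas[OF m])
  finally show ?thesis .
qed

lemma TI_funpow:
  assumes "bnn B \<phi>"
  shows "(\<integral>y. \<phi> y \<partial>TI n x) = (Pop ^^ n) \<phi> x"
  using assms
proof (induction n arbitrary: \<phi> x)
  case 0
  have m: "\<phi> \<in> borel_measurable borel" using 0 by (simp add: bnn_def)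
  then show ?case by (simp add: integral_return)
next
  case (Suc n)
  have "(\<integral>y. \<phi> y \<partial>TI (Suc n) x) = (\<integral>y. Pop \<phi> y \<partial>TI n x)" by (rule int_TI_Suc[OF Suc.prems])
  also have "\<dots> = (Pop ^^ n) (Pop \<phi>) x" by (rule Suc.IH[OF Pop_bnn[OF Suc.prems]])
  finally show ?case by (simp add: funpow_Suc_right del: funpow.simps)
qed

lemma bnn_funpow: "bnn B \<phi> \<Longrightarrow> bnn B ((Pop ^^ n) \<phi>)"
  by (induction n) (auto intro: Pop_bnn)

lemma Bg0: "Bg \<ge> 0" using gf_bound[of 0 0] by simp

definition aa where "aa = \<bar>\<psi>2\<bar> + 1"
definition VV :: "real \<times> real \<Rightarrow> real" where "VV x = \<bar>fst x\<bar> + aa * \<bar>snd x\<bar>"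
definition lam where "lam = max \<bar>\<psi>1\<bar> (\<bar>\<psi>2\<bar> / aa)"
definition m1 where "m1 = (\<integral>e. \<bar>e\<bar> \<partial>D)"
definition K1 where "K1 = Bg + (1 + aa) * m1"

lemma aa_pos: "aa > 0" by (simp add: aa_def add_nonneg_pos)
lemma lam0: "0 \<le> lam" by (simp add: lam_def)
lemma lam1: "lam < 1"
  using psi1 aa_pos by (auto simp: lam_def aa_def divide_less_eq)
lemma m10: "m1 \<ge> 0" by (simp add: m1_def)
lemma K10: "K1 \<ge> 0" using Bg0 m10 aa_pos by (simp add: K1_def)
lemma VV0: "VV x \<ge> 0" using aa_pos by (simp add: VV_def)
lemma VV_cont: "continuous_on UNIV VV" unfolding VV_def by (intro continuous_intros)
lemma VV_meas[measurable]: "VV \<in> borel_measurable borel" by (rule borel_measurable_continuous_onI[OF VV_cont])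

lemma hh_bound: "\<bar>hh x\<bar> \<le> lam * VV x + Bg"
proof -
  have a: "\<bar>\<psi>1 * fst x\<bar> \<le> lam * \<bar>fst x\<bar>"
    by (simp add: abs_mult lam_def mult_right_mono)
  have "\<bar>\<psi>2 * snd x\<bar> = (\<bar>\<psi>2\<bar> / aa) * (aa * \<bar>snd x\<bar>)" using aa_pos by (simp add: abs_mult)
  also have "\<dots> \<le> lam * (aa * \<bar>snd x\<bar>)" using aa_pos by (intro mult_right_mono) (auto simp: lam_def)
  finally have b: "\<bar>\<psi>2 * snd x\<bar> \<le> lam * (aa * \<bar>snd x\<bar>)" .
  have "\<bar>hh x\<bar> \<le> \<bar>\<psi>1 * fst x\<bar> + \<bar>\<psi>2 * snd x\<bar> + \<bar>gf (fst x) (snd x)\<bar>"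
    unfolding hh_def by linarith
  also have "\<dots> \<le> lam * \<bar>fst x\<bar> + lam * (aa * \<bar>snd x\<bar>) + Bg" using a b gf_bound by (intro add_mono) auto
  finally show ?thesis by (simp add: VV_def algebra_simps)
qed

lemma int_abs_D: "integrable D (\<lambda>e. c + d * \<bar>e\<bar>)"
proof -
  interpret prob_space D by (rule D_prob)
  show ?thesis using eps_mean by auto
qed

lemma drift1: "(\<integral>\<^sup>+y. ennreal (VV y) \<partial>PP x) \<le> ennreal (lam * VV x + K1)"
proof -
  interpret prob_space D by (rule D_prob)
  have "(\<integral>\<^sup>+y. ennreal (VV y) \<partial>PP x) = (\<integral>\<^sup>+e. ennreal (VV (hh x + e, e)) \<partial>D)"
    unfolding PP_eq by (subst nn_integral_distr) (auto simp: sets_D)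
  also have "\<dots> \<le> (\<integral>\<^sup>+e. ennreal (\<bar>hh x\<bar> + (1 + aa) * \<bar>e\<bar>) \<partial>D)"
  proof (rule nn_integral_mono)
    fix e
    have "VV (hh x + e, e) \<le> \<bar>hh x\<bar> + (1 + aa) * \<bar>e\<bar>"
      unfolding VV_def by (simp add: algebra_simps abs_triangle_ineq)
    then show "ennreal (VV (hh x + e, e)) \<le> ennreal (\<bar>hh x\<bar> + (1 + aa) * \<bar>e\<bar>)" by (rule ennreal_leI)
  qed
  also have "\<dots> = ennreal (\<integral>e. \<bar>hh x\<bar> + (1 + aa) * \<bar>e\<bar> \<partial>D)"
    by (rule nn_integral_eq_integral[OF int_abs_D]) (use aa_pos in auto)
  also have "(\<integral>e. \<bar>hh x\<bar> + (1 + aa) * \<bar>e\<bar> \<partial>D) = \<bar>hh x\<bar> + (1 + aa) * m1"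
    using eps_mean by (simp add: m1_def prob_space)
  also have "ennreal (\<bar>hh x\<bar> + (1 + aa) * m1) \<le> ennreal (lam * VV x + K1)"
    using hh_bound[of x] by (intro ennreal_leI) (simp add: K1_def)
  finally show ?thesis .
qed

lemma drift_n: "(\<integral>\<^sup>+y. ennreal (VV y) \<partial>TI n x) \<le> ennreal (lam ^ n * VV x + K1 * (\<Sum>i<n. lam ^ i))"
proof (induction n)
  case 0
  then show ?case by (simp add: nn_integral_return VV0)
next
  case (Suc n)
  interpret prob_space "TI n x" by (rule TI_prob)
  have "(\<integral>\<^sup>+y. ennreal (VV y) \<partial>TI (Suc n) x) = (\<integral>\<^sup>+z. (\<integral>\<^sup>+y. ennreal (VV y) \<partial>PP z) \<partial>TI n x)"
    by (rule nn_TI_Suc) simp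
  also have "\<dots> \<le> (\<integral>\<^sup>+z. ennreal (lam * VV z + K1) \<partial>TI n x)"
    by (rule nn_integral_mono) (rule drift1)
  also have "\<dots> = (\<integral>\<^sup>+z. ennreal lam * ennreal (VV z) + ennreal K1 \<partial>TI n x)"
  proof (rule nn_integral_cong)
    fix z
    have "ennreal (lam * VV z + K1) = ennreal (lam * VV z) + ennreal K1"
      using lam0 VV0[of z] K10 by (intro ennreal_plus) auto
    also have "ennreal (lam * VV z) = ennreal lam * ennreal (VV z)"
      using lam0 VV0[of z] by (intro ennreal_mult) auto
    finally show "ennreal (lam * VV z + K1) = ennreal lam * ennreal (VV z) + ennreal K1" .
  qed
  also have "\<dots> = ennreal lam * (\<integral>\<^sup>+z. ennreal (VV z) \<partial>TI n x) + ennreal K1"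
  proof -
    have "(\<integral>\<^sup>+z. ennreal lam * ennreal (VV z) \<partial>TI n x) = ennreal lam * (\<integral>\<^sup>+z. ennreal (VV z) \<partial>TI n x)"
      by (rule nn_integral_cmult) (auto intro!: meas_TI)
    then show ?thesis by (subst nn_integral_add) (auto intro!: meas_TI)
  qed
  also have "\<dots> \<le> ennreal lam * ennreal (lam ^ n * VV x + K1 * (\<Sum>i<n. lam ^ i)) + ennreal K1"
    by (intro add_mono mult_left_mono Suc.IH) auto
  also have "\<dots> = ennreal (lam ^ Suc n * VV x + K1 * (\<Sum>i<Suc n. lam ^ i))"
  proof -
    have nn: "0 \<le> lam ^ n * VV x + K1 * (\<Sum>i<n. lam ^ i)"
      using lam0 VV0 K10 by (intro add_nonneg_nonneg mult_nonneg_nonneg sum_nonneg) auto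
    have "ennreal lam * ennreal (lam ^ n * VV x + K1 * (\<Sum>i<n. lam ^ i)) + ennreal K1
       = ennreal (lam * (lam ^ n * VV x + K1 * (\<Sum>i<n. lam ^ i))) + ennreal K1"
      using nn lam0 by (subst ennreal_mult) auto
    also have "\<dots> = ennreal (lam * (lam ^ n * VV x + K1 * (\<Sum>i<n. lam ^ i)) + K1)"
      using nn lam0 K10 by (subst ennreal_plus) auto
    also have "lam * (lam ^ n * VV x + K1 * (\<Sum>i<n. lam ^ i)) + K1 = lam ^ Suc n * VV x + K1 * (\<Sum>i<Suc n. lam ^ i)"
    proof -
      have "(\<Sum>i<Suc n. lam ^ i) = 1 + lam * (\<Sum>i<n. lam ^ i)"
        by (subst sum.lessThan_Suc_shift) (simp add: sum_distrib_left)
      then show ?thesis by (simp add: algebra_simps)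
    qed
    finally show ?thesis .
  qed
  finally show ?case .
qed

definition KK where "KK = K1 / (1 - lam)"

lemma KK0: "KK \<ge> 0" using K10 lam1 by (simp add: KK_def)

lemma geo_le: "(\<Sum>i<n. lam ^ i) \<le> 1 / (1 - lam)"
proof -
  have "(\<Sum>i<n. lam ^ i) = (1 - lam ^ n) / (1 - lam)" using lam1 by (simp add: sum_gp_strict)
  also have "\<dots> \<le> 1 / (1 - lam)" using lam1 lam0 by (simp add: divide_right_mono)
  finally show ?thesis .
qed

lemma VV_int: "integrable (TI n x) VV"
proof (rule integrableI_bounded)
  show "VV \<in> borel_measurable (TI n x)" by (rule meas_TI) simp
  have "(\<integral>\<^sup>+y. ennreal (norm (VV y)) \<partial>TI n x) = (\<integral>\<^sup>+y. ennreal (VV y) \<partial>TI n x)"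
    using VV0 by simp
  also have "\<dots> < \<infinity>" using drift_n[of n x] by (simp add: le_less_trans)
  finally show "(\<integral>\<^sup>+y. ennreal (norm (VV y)) \<partial>TI n x) < \<infinity>" .
qed

lemma VV_int_bound: "(\<integral>y. VV y \<partial>TI n x) \<le> lam ^ n * VV x + KK"
proof -
  have "(\<integral>y. VV y \<partial>TI n x) = enn2real (\<integral>\<^sup>+y. ennreal (VV y) \<partial>TI n x)"
    by (rule integral_eq_nn_integral) (auto intro: meas_TI simp: VV0)
  also have "\<dots> \<le> lam ^ n * VV x + K1 * (\<Sum>i<n. lam ^ i)"
  proof -
    have nn: "0 \<le> lam ^ n * VV x + K1 * (\<Sum>i<n. lam ^ i)"
      using lam0 VV0 K10 by (intro add_nonneg_nonneg mult_nonneg_nonneg sum_nonneg) auto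
    show ?thesis using drift_n[of n x] nn by (simp add: enn2real_leI)
  qed
  also have "\<dots> \<le> lam ^ n * VV x + KK"
    using geo_le[of n] K10 unfolding KK_def by (simp add: mult_left_mono[of _ _ K1, where b="1/(1-lam)", simplified])
  finally show ?thesis .
qed

end


lemma tendsto_pow_div3:
  fixes q :: real
  assumes "0 \<le> q" "q < 1"
  shows "(\<lambda>n. q ^ (n div 3)) \<longlonglongrightarrow> 0"
proof (rule LIMSEQ_I)
  fix r :: real assume r: "0 < r"
  have "(\<lambda>j. q ^ j) \<longlonglongrightarrow> 0" using assms by (intro LIMSEQ_power_zero) auto
  from LIMSEQ_D[OF this r] obtain J where J: "\<And>j. j \<ge> J \<Longrightarrow> norm (q ^ j - 0) < r" by blast
  show "\<exists>no. \<forall>n\<ge>no. norm (q ^ (n div 3) - 0) < r"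
  proof (intro exI allI impI)
    fix n assume "n \<ge> 3 * J"
    hence "n div 3 \<ge> J" by auto
    then show "norm (q ^ (n div 3) - 0) < r" using J by blast
  qed
qed

context parnn begin

definition gam where "gam = lam ^ 3"
definition RR where "RR = 2 * (4 * KK + 1) / (1 - gam)"

lemma gam0: "0 \<le> gam" using lam0 by (simp add: gam_def)
lemma gam1: "gam < 1" using lam0 lam1 unfolding gam_def by (simp add: power_less_one_iff)

lemma drift3: "(\<integral>y. VV y \<partial>TI 3 x) \<le> gam * VV x + KK"
  using VV_int_bound[of 3 x] by (simp add: gam_def)

end

locale parnn2 = parnn \<psi>1 \<psi>2 gf gd f D Bg for \<psi>1 \<psi>2 gf gd f D Bg +
  fixes \<alpha> :: real and \<nu> :: "(real \<times> real) measure"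
  assumes a0: "0 < \<alpha>" and a1: "\<alpha> \<le> 1"
    and nuprob: "prob_space \<nu>" and nusets: "sets \<nu> = sets borel"
    and nuint: "integrable \<nu> VV"
    and minor: "\<And>x F. VV x \<le> RR \<Longrightarrow> F \<in> borel_measurable borel \<Longrightarrow> (\<And>y. 0 \<le> F y) \<Longrightarrow>
        integrable (TI 3 x) F \<Longrightarrow> integrable \<nu> F \<Longrightarrow> (\<integral>y. F y \<partial>TI 3 x) \<ge> \<alpha> * (\<integral>y. F y \<partial>\<nu>)"
begin

definition bb where "bb = min 1 (\<alpha> / (gam * RR + 2 * KK + 1))"
definition ab where "ab = max ((1 + gam) / 2) (max (1 - bb / 2) (1 - \<alpha> / 2))"

lemma RR0: "RR > 0" using KK0 gam1 by (simp add: RR_def)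
lemma bb0: "bb > 0"
proof -
  have "gam * RR + 2 * KK + 1 > 0" using RR0 gam0 KK0 by (simp add: add_nonneg_pos)
  then show ?thesis using a0 by (simp add: bb_def)
qed
lemma ab1: "ab < 1" using gam1 bb0 a0 by (simp add: ab_def)
lemma ab0: "ab > 0" using gam0 by (simp add: ab_def less_max_iff_disj)

definition Lip :: "real \<Rightarrow> (real \<times> real \<Rightarrow> real) \<Rightarrow> bool" where
  "Lip L \<phi> \<longleftrightarrow> (\<forall>u v. \<bar>\<phi> u - \<phi> v\<bar> \<le> L * (2 + bb * VV u + bb * VV v))"

lemma contr:
  assumes "bnn B \<phi>" "Lip L \<phi>" "L \<ge> 0"
  shows "Lip (ab * L) ((Pop ^^ 3) \<phi>)"
  unfolding Lip_def
proof (intro allI)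
  fix u v
  have "\<bar>(\<integral>y. \<phi> y \<partial>TI 3 u) - (\<integral>y. \<phi> y \<partial>TI 3 v)\<bar> \<le> ab * L * (2 + bb * VV u + bb * VV v)"
  proof (rule harris_step[where SM=borel and B\<psi>=B and K=KK and R=RR and \<gamma>=gam and \<alpha>=\<alpha> and \<nu>=\<nu>])
    show "prob_space (TI 3 x)" for x by (rule TI_prob)
    show "sets (TI 3 x) = sets borel" for x by simp
    show "prob_space \<nu>" "sets \<nu> = sets borel" by (rule nuprob, rule nusets)
    show "VV \<in> borel_measurable borel" "\<And>x. 0 \<le> VV x" by (simp, rule VV0)
    show "integrable (TI 3 x) VV" for x by (rule VV_int)
    show "integrable \<nu> VV" by (rule nuint)
    show "(\<integral>y. VV y \<partial>TI 3 x) \<le> gam * VV x + KK" for x by (rule drift3)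
    show "\<alpha> * (\<integral>y. F y \<partial>\<nu>) \<le> (\<integral>y. F y \<partial>TI 3 x)"
      if "VV x \<le> RR" "F \<in> borel_measurable borel" "\<And>y. 0 \<le> F y" "integrable (TI 3 x) F" "integrable \<nu> F" for x F
      by (rule minor[OF that])
    show "\<phi> \<in> borel_measurable borel" using assms(1) by (simp add: bnn_def)
    show "\<bar>\<phi> y\<bar> \<le> B" for y
    proof -
      have "0 \<le> \<phi> y \<and> \<phi> y \<le> B" using assms(1) unfolding bnn_def by blast
      then show ?thesis by simp
    qed
    show "\<bar>\<phi> u - \<phi> v\<bar> \<le> L * (2 + bb * VV u + bb * VV v)" for u v using assms(2) unfolding Lip_def by blast
  qed (use assms(3) gam0 gam1 KK0 a0 a1 in \<open>auto simp: RR_def bb_def ab_def\<close>)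
  then show "\<bar>(Pop ^^ 3) \<phi> u - (Pop ^^ 3) \<phi> v\<bar> \<le> ab * L * (2 + bb * VV u + bb * VV v)"
    using TI_funpow[OF assms(1)] by simp
qed

lemma contr_iter:
  assumes "bnn B \<phi>" "Lip L \<phi>" "L \<ge> 0"
  shows "Lip (ab ^ j * L) ((Pop ^^ (3 * j)) \<phi>)"
proof (induction j)
  case 0
  then show ?case using assms(2) by simp
next
  case (Suc j)
  have "Lip (ab * (ab ^ j * L)) ((Pop ^^ 3) ((Pop ^^ (3 * j)) \<phi>))"
    by (rule contr[OF bnn_funpow[OF assms(1)] Suc]) (use assms(3) ab0 in simp)
  moreover have "(Pop ^^ (3 * Suc j)) = (Pop ^^ 3) \<circ> (Pop ^^ (3 * j))"
    by (simp add: funpow_add[symmetric])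
  ultimately show ?case by (simp add: mult.assoc)
qed

lemma bnn_ind: "A \<in> sets borel \<Longrightarrow> bnn 1 (indicator A)"
  by (simp add: bnn_def)

lemma Lip_half: "bnn 1 \<phi> \<Longrightarrow> Lip (1/2) \<phi>"
  unfolding Lip_def bnn_def
proof (intro allI)
  fix u v assume "\<phi> \<in> borel_measurable borel \<and> (\<forall>x. 0 \<le> \<phi> x \<and> \<phi> x \<le> 1)"
  hence "0 \<le> \<phi> u \<and> \<phi> u \<le> 1" "0 \<le> \<phi> v \<and> \<phi> v \<le> 1" by blast+
  hence "\<bar>\<phi> u - \<phi> v\<bar> \<le> 1" by (simp add: abs_le_iff)
  moreover have "0 \<le> bb * VV u + bb * VV v" using bb0 VV0 by (simp add: add_nonneg_nonneg)
  ultimately show "\<bar>\<phi> u - \<phi> v\<bar> \<le> 1 / 2 * (2 + bb * VV u + bb * VV v)" by simp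
qed

lemma meas_funpow: "A \<in> sets borel \<Longrightarrow> measure (TI n x) A = (Pop ^^ n) (indicator A) x"
  using TI_funpow[OF bnn_ind, of A n x] by simp

lemma main_bound:
  assumes "A \<in> sets borel"
  shows "\<bar>(Pop ^^ n) (indicator A) x - (Pop ^^ n) (indicator A) y\<bar> \<le> ab ^ (n div 3) * (1/2) * (2 + bb * VV x + bb * VV y)"
proof -
  define \<phi>0 where "\<phi>0 = (Pop ^^ (n mod 3)) (indicator A)"
  have b: "bnn 1 \<phi>0" unfolding \<phi>0_def by (rule bnn_funpow[OF bnn_ind[OF assms]])
  have "Lip (ab ^ (n div 3) * (1/2)) ((Pop ^^ (3 * (n div 3))) \<phi>0)"
    by (rule contr_iter[OF b Lip_half[OF b]]) simp
  moreover have "(Pop ^^ n) (indicator A) = (Pop ^^ (3 * (n div 3))) \<phi>0"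
  proof -
    have "n = 3 * (n div 3) + n mod 3" by simp
    then have "(Pop ^^ n) = (Pop ^^ (3 * (n div 3))) \<circ> (Pop ^^ (n mod 3))"
      by (metis funpow_add)
    then show ?thesis by (simp add: \<phi>0_def)
  qed
  ultimately show ?thesis unfolding Lip_def by (metis (no_types, lifting))
qed

definition CC where "CC x = (1/2) * (2 + bb * VV x + bb * (VV x + KK))"

lemma cauchy_bound:
  assumes "A \<in> sets borel"
  shows "\<bar>measure (TI (m + n) x) A - measure (TI n x) A\<bar> \<le> ab ^ (n div 3) * CC x"
proof -
  define a where "a = (Pop ^^ n) (indicator A)"
  have b: "bnn 1 a" unfolding a_def by (rule bnn_funpow[OF bnn_ind[OF assms]])
  have ia: "integrable (TI m x) a" by (rule bnn_integrable[OF b TI_prob sets_TI])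
  interpret prob_space "TI m x" by (rule TI_prob)
  have "measure (TI (m + n) x) A = (Pop ^^ m) a x"
    by (simp add: meas_funpow[OF assms] a_def funpow_add)
  also have "\<dots> = (\<integral>y. a y \<partial>TI m x)" by (rule TI_funpow[OF b, symmetric])
  finally have e1: "measure (TI (m + n) x) A = (\<integral>y. a y \<partial>TI m x)" .
  have e2: "measure (TI n x) A = (\<integral>y. a x \<partial>TI m x)" by (simp add: meas_funpow[OF assms] a_def)
  have "\<bar>(\<integral>y. a y \<partial>TI m x) - (\<integral>y. a x \<partial>TI m x)\<bar> = \<bar>(\<integral>y. a y - a x \<partial>TI m x)\<bar>"
    using ia by simp
  also have "\<dots> \<le> (\<integral>y. \<bar>a y - a x\<bar> \<partial>TI m x)" by (rule integral_abs_bound)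
  also have "\<dots> \<le> (\<integral>y. ab ^ (n div 3) * (1/2) * (2 + bb * VV y + bb * VV x) \<partial>TI m x)"
  proof (rule integral_mono)
    show "integrable (TI m x) (\<lambda>y. \<bar>a y - a x\<bar>)" using ia by auto
    show "integrable (TI m x) (\<lambda>y. ab ^ (n div 3) * (1/2) * (2 + bb * VV y + bb * VV x))"
      using VV_int[of m x] by auto
    show "\<bar>a y - a x\<bar> \<le> ab ^ (n div 3) * (1/2) * (2 + bb * VV y + bb * VV x)" for y
      unfolding a_def by (rule main_bound[OF assms])
  qed
  also have "\<dots> = ab ^ (n div 3) * (1/2) * (2 + bb * (\<integral>y. VV y \<partial>TI m x) + bb * VV x)"
    using VV_int[of m x] by (simp add: prob_space)
  also have "\<dots> \<le> ab ^ (n div 3) * CC x"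
  proof -
    have "(\<integral>y. VV y \<partial>TI m x) \<le> VV x + KK"
    proof -
      have "lam ^ m * VV x \<le> VV x" using lam0 lam1 VV0[of x]
        by (simp add: mult_left_le_one_le power_le_one)
      then show ?thesis using VV_int_bound[of m x] by linarith
    qed
    hence "bb * (\<integral>y. VV y \<partial>TI m x) \<le> bb * (VV x + KK)" using bb0 by simp
    hence "2 + bb * (\<integral>y. VV y \<partial>TI m x) + bb * VV x \<le> 2 + bb * VV x + bb * (VV x + KK)" by linarith
    hence "ab ^ (n div 3) * (1/2) * (2 + bb * (\<integral>y. VV y \<partial>TI m x) + bb * VV x) \<le> ab ^ (n div 3) * (1/2) * (2 + bb * VV x + bb * (VV x + KK))"
      using ab0 by (intro mult_left_mono) auto
    then show ?thesis unfolding CC_def by (simp add: mult.assoc)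
  qed
  finally show ?thesis using e1 e2 by simp
qed

end


context parnn2 begin

abbreviation x0 :: "real \<times> real" where "x0 \<equiv> (0, 0)"

definition mu :: "(real \<times> real) set \<Rightarrow> real" where
  "mu A = lim (\<lambda>n. measure (TI n x0) A)"

lemma ab_pow_tend: "(\<lambda>n. ab ^ (n div 3) * c) \<longlonglongrightarrow> 0"
  using tendsto_mult_left_zero[OF tendsto_pow_div3[of ab]] ab0 ab1 by simp

lemma conv:
  assumes A: "A \<in> sets borel"
  shows "(\<lambda>n. measure (TI n x0) A) \<longlonglongrightarrow> mu A"
proof -
  have "Cauchy (\<lambda>n. measure (TI n x0) A)"
  proof (rule CauchyI)
    fix e :: real assume e: "0 < e"
    from LIMSEQ_D[OF ab_pow_tend[of "CC x0"], of "e/2"] e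
    obtain N where N: "\<And>n. n \<ge> N \<Longrightarrow> norm (ab ^ (n div 3) * CC x0 - 0) < e/2" by auto
    have NN: "ab ^ (N div 3) * CC x0 < e/2" using N[of N] by simp
    show "\<exists>M. \<forall>m\<ge>M. \<forall>n\<ge>M. norm (measure (TI m x0) A - measure (TI n x0) A) < e"
    proof (intro exI allI impI)
      fix m n assume mn: "m \<ge> N" "n \<ge> N"
      have 1: "\<bar>measure (TI m x0) A - measure (TI N x0) A\<bar> \<le> ab ^ (N div 3) * CC x0"
        using cauchy_bound[OF A, of "m - N" N x0] mn by simp
      have 2: "\<bar>measure (TI n x0) A - measure (TI N x0) A\<bar> \<le> ab ^ (N div 3) * CC x0"
        using cauchy_bound[OF A, of "n - N" N x0] mn by simp
      show "norm (measure (TI m x0) A - measure (TI n x0) A) < e" using 1 2 NN by simp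
    qed
  qed
  then have "convergent (\<lambda>n. measure (TI n x0) A)" by (simp add: Cauchy_convergent_iff)
  then show ?thesis unfolding mu_def by (simp add: convergent_LIMSEQ_iff)
qed

definition C2 where "C2 x = CC x + (1/2) * (2 + bb * VV x + bb * VV x0)"

lemma bound_all:
  assumes A: "A \<in> sets borel"
  shows "\<bar>measure (TI n x) A - mu A\<bar> \<le> ab ^ (n div 3) * C2 x"
proof -
  have each: "\<bar>measure (TI n x) A - measure (TI (m + n) x0) A\<bar> \<le> ab ^ (n div 3) * C2 x" for m
  proof -
    have 1: "\<bar>measure (TI (m + n) x) A - measure (TI n x) A\<bar> \<le> ab ^ (n div 3) * CC x"
      by (rule cauchy_bound[OF A])
    have 2: "\<bar>measure (TI (m + n) x) A - measure (TI (m + n) x0) A\<bar> \<le> ab ^ ((m + n) div 3) * (1/2) * (2 + bb * VV x + bb * VV x0)"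
      using main_bound[OF A, of "m + n" x x0] by (simp add: meas_funpow[OF A])
    have 3: "ab ^ ((m + n) div 3) \<le> ab ^ (n div 3)"
      using ab0 ab1 by (intro power_decreasing) (auto intro: div_le_mono)
    have 4: "0 \<le> (1/2) * (2 + bb * VV x + bb * VV x0)" using bb0 VV0[of x] VV0[of x0] by simp
    have "ab ^ ((m + n) div 3) * (1/2) * (2 + bb * VV x + bb * VV x0) \<le> ab ^ (n div 3) * ((1/2) * (2 + bb * VV x + bb * VV x0))"
      using mult_right_mono[OF 3 4] by (simp add: mult.assoc)
    then show ?thesis using 1 2 unfolding C2_def distrib_left by (smt (verit))
  qed
  have t: "(\<lambda>m. measure (TI (m + n) x0) A) \<longlonglongrightarrow> mu A"
    using LIMSEQ_ignore_initial_segment[OF conv[OF A], of n] by simp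
  have "(\<lambda>m. \<bar>measure (TI n x) A - measure (TI (m + n) x0) A\<bar>) \<longlonglongrightarrow> \<bar>measure (TI n x) A - mu A\<bar>"
    by (intro tendsto_intros t)
  then show ?thesis by (rule tendsto_upperbound) (use each in auto)
qed

lemma mu_nonneg: "A \<in> sets borel \<Longrightarrow> 0 \<le> mu A"
  by (rule LIMSEQ_le_const[OF conv]) auto

lemma mu_UNIV: "mu UNIV = 1"
  using conv[of UNIV] by (simp add: LIMSEQ_const_iff)

lemma mu_empty: "mu {} = 0"
  using conv[of "{}"] by (simp add: LIMSEQ_const_iff)

lemma mu_add:
  assumes "A \<in> sets borel" "B \<in> sets borel" "A \<inter> B = {}"
  shows "mu (A \<union> B) = mu A + mu B"
proof -
  have "(\<lambda>n. measure (TI n x0) (A \<union> B)) = (\<lambda>n. measure (TI n x0) A + measure (TI n x0) B)"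
  proof
    fix n
    interpret prob_space "TI n x0" by (rule TI_prob)
    show "measure (TI n x0) (A \<union> B) = measure (TI n x0) A + measure (TI n x0) B"
      using assms by (intro finite_measure_Union) auto
  qed
  moreover have "(\<lambda>n. measure (TI n x0) A + measure (TI n x0) B) \<longlonglongrightarrow> mu A + mu B"
    using assms by (intro tendsto_add conv)
  ultimately have "(\<lambda>n. measure (TI n x0) (A \<union> B)) \<longlonglongrightarrow> mu A + mu B" by simp
  moreover have "(\<lambda>n. measure (TI n x0) (A \<union> B)) \<longlonglongrightarrow> mu (A \<union> B)" using assms by (intro conv) auto
  ultimately show ?thesis using LIMSEQ_unique by blast
qed

lemma mu_cont:
  assumes "range A \<subseteq> sets borel" "decseq A" "(\<Inter>i. A i) = {}"
  shows "(\<lambda>i. mu (A i)) \<longlonglongrightarrow> 0"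
proof (rule LIMSEQ_I)
  fix r :: real assume r: "0 < r"
  from LIMSEQ_D[OF ab_pow_tend[of "C2 x0"], of "r/2"] r
  obtain N where N: "norm (ab ^ (N div 3) * C2 x0 - 0) < r/2" by auto
  interpret prob_space "TI N x0" by (rule TI_prob)
  have "(\<lambda>i. measure (TI N x0) (A i)) \<longlonglongrightarrow> measure (TI N x0) (\<Inter>i. A i)"
    by (rule finite_Lim_measure_decseq) (use assms in auto)
  then have "(\<lambda>i. measure (TI N x0) (A i)) \<longlonglongrightarrow> 0" using assms(3) by simp
  moreover have r2: "0 < r/2" using r by simp
  ultimately obtain I where I: "\<And>i. i \<ge> I \<Longrightarrow> norm (measure (TI N x0) (A i) - 0) < r/2"
    using LIMSEQ_D by blast
  show "\<exists>no. \<forall>n\<ge>no. norm (mu (A n) - 0) < r"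
  proof (intro exI allI impI)
    fix i assume "i \<ge> I"
    have Ai: "A i \<in> sets borel" using assms(1) by auto
    have "mu (A i) \<le> measure (TI N x0) (A i) + ab ^ (N div 3) * C2 x0"
      using bound_all[OF Ai, of N x0] by simp
    moreover have "measure (TI N x0) (A i) < r/2" using I[OF \<open>i \<ge> I\<close>] r by simp
    moreover have "ab ^ (N div 3) * C2 x0 < r/2" using N by simp
    moreover have "0 \<le> mu (A i)" by (rule mu_nonneg[OF Ai])
    ultimately show "norm (mu (A i) - 0) < r" by simp
  qed
qed

definition Pinv :: "(real \<times> real) measure" where
  "Pinv = measure_of UNIV (sets borel) (\<lambda>A. ennreal (mu A))"

lemma sa: "sigma_algebra UNIV (sets (borel :: (real \<times> real) measure))"
  by (metis sets.sigma_algebra_axioms space_borel)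

lemma sets_Pinv: "sets Pinv = sets borel"
  unfolding Pinv_def by (rule sigma_algebra.sets_measure_of_eq[OF sa])

lemma space_Pinv: "space Pinv = UNIV"
  unfolding Pinv_def by (rule sigma_algebra.space_measure_of_eq[OF sa])

lemma emeasure_Pinv:
  assumes "A \<in> sets borel"
  shows "emeasure Pinv A = ennreal (mu A)"
proof -
  interpret sigma_algebra UNIV "sets (borel :: (real \<times> real) measure)" by (rule sa)
  have pos: "positive (sets borel) (\<lambda>A. ennreal (mu A))"
    by (simp add: positive_def mu_empty)
  have add: "additive (sets borel) (\<lambda>A. ennreal (mu A))"
    unfolding additive_def
  proof (intro ballI impI)
    fix x y :: "(real \<times> real) set" assume xy: "x \<in> sets borel" "y \<in> sets borel" "x \<inter> y = {}"
    show "ennreal (mu (x \<union> y)) = ennreal (mu x) + ennreal (mu y)"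
      using mu_add[OF xy] mu_nonneg xy by (simp add: ennreal_plus)
  qed
  have ca: "countably_additive (sets borel) (\<lambda>A. ennreal (mu A))"
  proof (rule empty_continuous_imp_countably_additive[OF pos add])
    show "\<forall>A\<in>sets borel. ennreal (mu A) \<noteq> \<infinity>" by simp
    fix A :: "nat \<Rightarrow> (real \<times> real) set"
    assume "range A \<subseteq> sets borel" "decseq A" "(\<Inter>i. A i) = {}"
    from tendsto_ennrealI[OF mu_cont[OF this]] show "(\<lambda>i. ennreal (mu (A i))) \<longlonglongrightarrow> 0" by simp
  qed
  show ?thesis unfolding Pinv_def
    by (rule emeasure_measure_of_sigma[OF sa pos ca assms])
qed

lemma measure_Pinv: "A \<in> sets borel \<Longrightarrow> measure Pinv A = mu A"
  using emeasure_Pinv mu_nonneg by (simp add: measure_def)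

lemma prob_Pinv: "prob_space Pinv"
  by (rule prob_spaceI) (simp add: space_Pinv emeasure_Pinv mu_UNIV)

lemma tv_bound: "tv_dist (TI n x) Pinv \<le> ab ^ (n div 3) * C2 x"
  unfolding tv_dist_def
  by (rule cSUP_least) (auto simp: measure_Pinv bound_all)

lemma tv_nonneg: "0 \<le> tv_dist (TI n x) Pinv"
proof -
  have bdd: "bdd_above ((\<lambda>A. \<bar>measure (TI n x) A - measure Pinv A\<bar>) ` sets borel)"
    by (rule bdd_aboveI[where M="ab ^ (n div 3) * C2 x"]) (auto simp: measure_Pinv bound_all)
  have "0 \<le> \<bar>measure (TI n x) {} - measure Pinv {}\<bar>" by simp
  also have "\<dots> \<le> tv_dist (TI n x) Pinv"
    unfolding tv_dist_def by (rule cSUP_upper[OF _ bdd]) simp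
  finally show ?thesis .
qed

lemma geo_erg: "geometrically_ergodic PP"
  unfolding geometrically_ergodic_def
proof (intro exI conjI)
  show "prob_space Pinv" by (rule prob_Pinv)
  show "sets Pinv = sets borel" by (rule sets_Pinv)
  define d where "d = (1 - ab) / 7"
  define \<rho> where "\<rho> = 1 + d"
  have d0: "0 < d" "d \<le> 1" using ab1 ab0 by (auto simp: d_def)
  show "\<rho> > 1" using d0 by (simp add: \<rho>_def)
  define q where "q = \<rho> ^ 3 * ab"
  have q0: "0 \<le> q" using ab0 d0 by (simp add: q_def \<rho>_def)
  have q1: "q < 1"
  proof -
    have "\<rho> ^ 3 = 1 + 3 * d + 3 * d^2 + d^3" by (simp add: \<rho>_def power3_eq_cube power2_eq_square algebra_simps)
    also have "\<dots> \<le> 1 + 7 * d"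
    proof -
      have "d^2 \<le> d" "d^3 \<le> d" using d0 by (simp_all add: power_le_one_iff power2_eq_square power3_eq_cube mult_le_one)
      then show ?thesis by simp
    qed
    finally have "\<rho> ^ 3 \<le> 1 + 7 * d" .
    moreover have "1 + 7 * d = 2 - ab" by (simp add: d_def)
    ultimately have "\<rho> ^ 3 \<le> 2 - ab" by simp
    hence "q \<le> (2 - ab) * ab" unfolding q_def using ab0 by (simp add: mult_right_mono)
    also have "\<dots> = 1 - (1 - ab)^2" by (simp add: power2_eq_square algebra_simps)
    also have "\<dots> < 1" using ab1 by simp
    finally show ?thesis .
  qed
  show "\<forall>x. (\<lambda>t. \<rho> ^ t * tv_dist (trans_iter PP t x) Pinv) \<longlonglongrightarrow> 0"
  proof
    fix x
    have up: "\<rho> ^ t * tv_dist (TI t x) Pinv \<le> \<rho> ^ 2 * C2 x * q ^ (t div 3)" for t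
    proof -
      have r0: "0 \<le> \<rho> ^ t" using d0 by (simp add: \<rho>_def)
      have s1: "\<rho> ^ t * tv_dist (TI t x) Pinv \<le> \<rho> ^ t * (ab ^ (t div 3) * C2 x)"
        by (rule mult_left_mono[OF tv_bound r0])
      have e: "\<rho> ^ t = \<rho> ^ (t mod 3) * (\<rho> ^ 3) ^ (t div 3)"
        by (metis div_mult_mod_eq power_add power_mult add.commute mult.commute)
      have m2: "\<rho> ^ (t mod 3) \<le> \<rho> ^ 2"
        using d0 by (intro power_increasing) (auto simp: \<rho>_def)
      have nn: "0 \<le> (\<rho> ^ 3) ^ (t div 3) * (ab ^ (t div 3) * C2 x)"
        using d0 ab0 tv_nonneg[of t x] tv_bound[of t x] by (simp add: \<rho>_def)
      have s2: "\<rho> ^ (t mod 3) * ((\<rho> ^ 3) ^ (t div 3) * (ab ^ (t div 3) * C2 x)) \<le> \<rho> ^ 2 * ((\<rho> ^ 3) ^ (t div 3) * (ab ^ (t div 3) * C2 x))"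
        by (rule mult_right_mono[OF m2 nn])
      have s3: "\<rho> ^ 2 * ((\<rho> ^ 3) ^ (t div 3) * (ab ^ (t div 3) * C2 x)) = \<rho> ^ 2 * C2 x * q ^ (t div 3)"
        by (simp add: q_def power_mult_distrib algebra_simps)
      have s4: "\<rho> ^ t * (ab ^ (t div 3) * C2 x) = \<rho> ^ (t mod 3) * ((\<rho> ^ 3) ^ (t div 3) * (ab ^ (t div 3) * C2 x))"
        by (simp only: e mult.assoc)
      show ?thesis using s1 s2 s3 s4 by linarith
    qed
    have lo: "0 \<le> \<rho> ^ t * tv_dist (TI t x) Pinv" for t
      using tv_nonneg[of t x] d0 by (simp add: \<rho>_def)
    have "(\<lambda>t. \<rho> ^ 2 * C2 x * q ^ (t div 3)) \<longlonglongrightarrow> 0"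
      using tendsto_mult_right_zero[OF tendsto_pow_div3[OF q0 q1], of "\<rho> ^ 2 * C2 x"] by simp
    moreover have "eventually (\<lambda>t. 0 \<le> \<rho> ^ t * tv_dist (TI t x) Pinv) sequentially"
      using lo by simp
    moreover have "eventually (\<lambda>t. \<rho> ^ t * tv_dist (TI t x) Pinv \<le> \<rho> ^ 2 * C2 x * q ^ (t div 3)) sequentially"
      using up by simp
    ultimately show "(\<lambda>t. \<rho> ^ t * tv_dist (TI t x) Pinv) \<longlonglongrightarrow> 0"
      using tendsto_sandwich[of "\<lambda>_. 0" "\<lambda>t. \<rho> ^ t * tv_dist (TI t x) Pinv" sequentially "\<lambda>t. \<rho> ^ 2 * C2 x * q ^ (t div 3)" 0]
      by simp
  qed
qed

end


context parnn begin

definition ss where "ss = \<psi>1 + \<psi>2"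
definition uu where "uu w e = \<psi>1 * w + ss * e + gf (w + e) e"
definition ud where "ud w e = ss + gd w e"

lemma hh_uu: "hh (w + e, e) = uu w e"
  by (simp add: hh_def uu_def ss_def algebra_simps)

lemma uu_deriv: "((\<lambda>e. uu w e) has_real_derivative ud w e) (at e)"
proof -
  have d1: "((\<lambda>e. ss * e) has_real_derivative ss) (at e)"
    using DERIV_cmult_Id[of ss e UNIV] by simp
  have "((\<lambda>e. \<psi>1 * w + ss * e + gf (w + e) e) has_real_derivative 0 + ss + gd w e) (at e)"
    by (rule DERIV_add[OF DERIV_add[OF DERIV_const d1] gf_deriv])
  then show ?thesis by (simp add: uu_def[abs_def] ud_def)
qed

lemma ud_cont: "continuous_on UNIV (\<lambda>p. ud (fst p) (snd p))"
  unfolding ud_def by (intro continuous_intros gd_cont)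

lemma uu_cont: "continuous_on UNIV (\<lambda>p. uu (fst p) (snd p))"
proof -
  have "continuous_on UNIV (\<lambda>p. gf (fst (fst p + snd p, snd p)) (snd (fst p + snd p, snd p)))"
    by (rule continuous_on_compose2[OF gf_cont]) (auto intro!: continuous_intros)
  then show ?thesis unfolding uu_def by (intro continuous_intros) simp
qed

lemma uu_cont1: "continuous_on UNIV (\<lambda>e. uu w e)"
proof -
  have "continuous_on UNIV (\<lambda>e. (\<lambda>p. uu (fst p) (snd p)) ((\<lambda>e. (w, e)) e))"
    by (rule continuous_on_compose2[OF uu_cont]) (auto intro!: continuous_intros)
  then show ?thesis by simp
qed

lemma uu_cont2: "continuous_on UNIV (\<lambda>w. uu w e)"
proof -
  have "continuous_on UNIV (\<lambda>w. (\<lambda>p. uu (fst p) (snd p)) ((\<lambda>w. (w, e)) w))"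
    by (rule continuous_on_compose2[OF uu_cont]) (auto intro!: continuous_intros)
  then show ?thesis by simp
qed

lemma ud_cont1: "continuous_on S (\<lambda>e. ud w e)"
proof -
  have "continuous_on S (\<lambda>e. (\<lambda>p. ud (fst p) (snd p)) ((\<lambda>e. (w, e)) e))"
    by (rule continuous_on_compose2[OF ud_cont]) (auto intro!: continuous_intros)
  then show ?thesis by simp
qed

lemma uu_meas[measurable]: "(\<lambda>e. uu w e) \<in> borel_measurable borel"
  by (rule borel_measurable_continuous_onI[OF uu_cont1])

lemma ss_ne: "ss \<noteq> 0" using psi_sum by (simp add: ss_def)

lemma ud_nonzero: "\<exists>e0. ud 0 e0 \<noteq> 0"
proof (rule ccontr)
  assume "\<not> (\<exists>e0. ud 0 e0 \<noteq> 0)"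
  then have z: "\<forall>e. ((\<lambda>e. uu 0 e) has_real_derivative 0) (at e)"
    using uu_deriv[of 0] by auto
  define e1 where "e1 = (2 * Bg + 1) / ss"
  have "uu 0 e1 = uu 0 0" by (rule DERIV_isconst_all[OF z])
  moreover have "uu 0 e1 = 2 * Bg + 1 + gf e1 e1" using ss_ne by (simp add: uu_def e1_def)
  moreover have "uu 0 0 = gf 0 0" by (simp add: uu_def)
  ultimately show False using gf_bound[of e1 e1] gf_bound[of 0 0] by (simp add: abs_le_iff)
qed

lemma nn_D: "(\<integral>\<^sup>+e. H e \<partial>D) = (\<integral>\<^sup>+e. ennreal (f e) * H e \<partial>lborel)"
  if "H \<in> borel_measurable borel" for H :: "real \<Rightarrow> ennreal"
  unfolding D_def by (rule nn_integral_density) (use that f_meas in auto)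

lemma local_density:
  "\<exists>\<delta>'>0. \<exists>p q \<theta>. p < q \<and> \<theta> > 0 \<and> (\<forall>w \<Psi>. \<bar>w\<bar> < \<delta>' \<longrightarrow> \<Psi> \<in> borel_measurable borel \<longrightarrow>
      ennreal \<theta> * (\<integral>\<^sup>+v. \<Psi> v * indicator {p..q} v \<partial>lborel) \<le> (\<integral>\<^sup>+e. \<Psi> (uu w e) \<partial>D))"
proof -
  obtain e0 where ne: "ud 0 e0 \<noteq> 0" using ud_nonzero by blast
  define \<kappa>0 where "\<kappa>0 = \<bar>ud 0 e0\<bar>"
  have k0: "\<kappa>0 > 0" using ne by (simp add: \<kappa>0_def)
  define \<sigma> :: real where "\<sigma> = sgn (ud 0 e0)"
  have ss1: "\<sigma> * \<sigma> = 1" using ne by (simp add: \<sigma>_def sgn_if)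
  have sabs: "\<bar>\<sigma>\<bar> = 1" using ne by (simp add: \<sigma>_def sgn_if)
  have sk: "\<sigma> * ud 0 e0 = \<kappa>0" by (simp add: \<sigma>_def \<kappa>0_def sgn_if)
  have "\<exists>d>0. \<forall>x'\<in>UNIV. dist x' (0, e0) < d \<longrightarrow> dist (ud (fst x') (snd x')) (ud (fst (0, e0)) (snd (0::real, e0))) < \<kappa>0 / 2"
    using ud_cont k0 unfolding continuous_on_iff by (metis UNIV_I half_gt_zero)
  then obtain d where d0: "d > 0" and dd: "\<And>x'. dist x' (0, e0) < d \<Longrightarrow> \<bar>ud (fst x') (snd x') - ud 0 e0\<bar> < \<kappa>0 / 2"
    by (auto simp: dist_real_def)
  have near: "\<bar>ud w e - ud 0 e0\<bar> < \<kappa>0 / 2" if "\<bar>w\<bar> < d/2" "\<bar>e - e0\<bar> < d/2" for w e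
  proof -
    have "dist (w, e) (0, e0) = sqrt ((dist w 0)\<^sup>2 + (dist e e0)\<^sup>2)" by (simp add: dist_Pair_Pair)
    also have "\<dots> \<le> \<bar>dist w 0\<bar> + \<bar>dist e e0\<bar>" by (rule sqrt_sum_squares_le_sum_abs)
    also have "\<dots> < d" using that by (simp add: dist_real_def)
    finally show ?thesis using dd[of "(w, e)"] by simp
  qed
  define h where "h = d / 4"
  have h0: "h > 0" using d0 by (simp add: h_def)
  have "\<exists>d2>0. \<forall>w\<in>UNIV. dist w 0 < d2 \<longrightarrow> dist (uu w e0) (uu 0 e0) < \<kappa>0 * h / 4"
    using uu_cont2[of e0] k0 h0 unfolding continuous_on_iff by (metis UNIV_I divide_pos_pos mult_pos_pos zero_less_numeral)
  then obtain d2 where d20: "d2 > 0" and dd2: "\<And>w. \<bar>w\<bar> < d2 \<Longrightarrow> \<bar>uu w e0 - uu 0 e0\<bar> < \<kappa>0 * h / 4"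
    by (auto simp: dist_real_def)
  obtain m where m0: "m > 0" and fm: "\<And>x. x \<in> {e0 - h..e0 + h} \<Longrightarrow> m \<le> f x"
    using lsc_min[OF f_lsc f_pos, of "e0 - h" "e0 + h"] by blast
  define c0 where "c0 = uu 0 e0"
  define p where "p = c0 - \<kappa>0 * h / 4"
  define q where "q = c0 + \<kappa>0 * h / 4"
  define Kd where "Kd = 3 * \<kappa>0 / 2"
  have Kd0: "Kd > 0" using k0 by (simp add: Kd_def)
  show ?thesis
  proof (intro exI conjI allI impI)
    show "min (d/2) d2 > 0" using d0 d20 by simp
    show "p < q" using k0 h0 by (simp add: p_def q_def)
    show "m / Kd > 0" using m0 Kd0 by simp
    fix w :: real and \<Psi> :: "real \<Rightarrow> ennreal"
    assume w: "\<bar>w\<bar> < min (d/2) d2" and Pm[measurable]: "\<Psi> \<in> borel_measurable borel"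
    define g where "g x = uu w (\<sigma> * x)" for x
    define g' where "g' x = \<sigma> * ud w (\<sigma> * x)" for x
    define a where "a = \<sigma> * e0 - h"
    define b where "b = \<sigma> * e0 + h"
    have ab: "a < b" using h0 by (simp add: a_def b_def)
    have inI: "\<sigma> * x \<in> {e0 - h..e0 + h}" if "x \<in> {a..b}" for x
    proof -
      have "\<sigma> * x - e0 = \<sigma> * (x - \<sigma> * e0)" using ss1 by (simp add: algebra_simps)
      hence "\<bar>\<sigma> * x - e0\<bar> = \<bar>x - \<sigma> * e0\<bar>" using sabs by (simp add: abs_mult)
      moreover have "\<bar>x - \<sigma> * e0\<bar> \<le> h" using that by (auto simp: a_def b_def abs_le_iff)
      ultimately show ?thesis by (auto simp: abs_le_iff)
    qed
    have gbounds: "\<kappa>0 / 2 \<le> g' x \<and> g' x \<le> Kd" if "x \<in> {a..b}" for x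
    proof -
      have "\<bar>\<sigma> * x - e0\<bar> \<le> h" using inI[OF that] by (auto simp: abs_le_iff)
      hence "\<bar>\<sigma> * x - e0\<bar> < d/2" using h0 by (simp add: h_def)
      hence n: "\<bar>ud w (\<sigma> * x) - ud 0 e0\<bar> < \<kappa>0 / 2" using near w by simp
      have "\<bar>\<sigma> * (ud w (\<sigma> * x) - ud 0 e0)\<bar> < \<kappa>0 / 2" using n sabs by (simp add: abs_mult)
      hence "\<bar>g' x - \<kappa>0\<bar> < \<kappa>0 / 2" using sk by (simp add: g'_def right_diff_distrib)
      then have "- (\<kappa>0 / 2) < g' x - \<kappa>0 \<and> g' x - \<kappa>0 < \<kappa>0 / 2" by (smt (verit))
      then show ?thesis by (simp add: Kd_def)
    qed
    have deriv: "(g has_real_derivative g' x) (at x)" for x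
    proof -
      have "((\<lambda>x. uu w (\<sigma> * x)) has_real_derivative ud w (\<sigma> * x) * \<sigma>) (at x)"
        by (rule DERIV_chain2[OF uu_deriv]) (use DERIV_cmult_Id[of \<sigma> x UNIV] in simp)
      then show ?thesis by (simp add: g_def[abs_def] g'_def mult.commute)
    qed
    have contg': "continuous_on {a..b} g'"
    proof -
      have "continuous_on {a..b} (\<lambda>x. (\<lambda>e. ud w e) (\<sigma> * x))"
        by (rule continuous_on_compose2[OF ud_cont1]) (auto intro!: continuous_intros)
      then show ?thesis unfolding g'_def by (intro continuous_intros) simp
    qed
    have gmid: "g (\<sigma> * e0) = uu w e0" using ss1 by (simp add: g_def mult.assoc[symmetric])
    have up: "\<kappa>0 / 2 * (b - \<sigma> * e0) \<le> g b - g (\<sigma> * e0)"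
      by (rule mvt_lower) (use h0 deriv gbounds in \<open>auto simp: a_def b_def\<close>)
    have lo: "\<kappa>0 / 2 * (\<sigma> * e0 - a) \<le> g (\<sigma> * e0) - g a"
      by (rule mvt_lower) (use h0 deriv gbounds in \<open>auto simp: a_def b_def\<close>)
    have cw: "\<bar>uu w e0 - c0\<bar> < \<kappa>0 * h / 4" using dd2 w by (simp add: c0_def)
    have sub: "{p..q} \<subseteq> {g a..g b}"
    proof -
      define X where "X = \<kappa>0 * h"
      have lo': "X \<le> 2 * (uu w e0 - g a)" using lo gmid by (simp add: a_def algebra_simps X_def)
      have up': "X \<le> 2 * (g b - uu w e0)" using up gmid by (simp add: b_def algebra_simps X_def)
      have "- (\<kappa>0 * h / 4) < uu w e0 - c0 \<and> uu w e0 - c0 < \<kappa>0 * h / 4" using cw by (smt (verit))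
      hence cw': "4 * (uu w e0 - c0) < X" "4 * (c0 - uu w e0) < X" by (simp_all add: X_def)
      have "g a \<le> p" using lo' cw' by (simp add: p_def X_def[symmetric])
      moreover have "q \<le> g b" using up' cw' by (simp add: q_def X_def[symmetric])
      ultimately show ?thesis by auto
    qed
    have "ennreal (m / Kd) * (\<integral>\<^sup>+v. \<Psi> v * indicator {p..q} v \<partial>lborel) \<le> (\<integral>\<^sup>+x. ennreal (f (\<sigma> * x)) * \<Psi> (g x) \<partial>lborel)"
    proof (rule subst_lower[OF ab deriv contg' _ _ Kd0 _ _ Pm sub])
      show "0 \<le> g' x" "g' x \<le> Kd" if "x \<in> {a..b}" for x using gbounds[OF that] k0 by auto
      show "m \<le> f (\<sigma> * x)" if "x \<in> {a..b}" for x using fm[OF inI[OF that]] .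
    qed (use m0 in auto)
    also have "(\<integral>\<^sup>+x. ennreal (f (\<sigma> * x)) * \<Psi> (g x) \<partial>lborel) = (\<integral>\<^sup>+e. \<Psi> (uu w e) \<partial>D)"
    proof -
      have eq: "(\<integral>\<^sup>+e. \<Psi> (uu w e) \<partial>D) = (\<integral>\<^sup>+e. ennreal (f e) * \<Psi> (uu w e) \<partial>lborel)"
        by (rule nn_D) measurable
      have mf[measurable]: "f \<in> borel_measurable borel" by (rule f_meas)
      show ?thesis
      proof (cases "\<sigma> = 1")
        case True then show ?thesis using eq by (simp add: g_def)
      next
        case False
        then have "\<sigma> = -1" using ne by (auto simp: \<sigma>_def sgn_if split: if_splits)
        then show ?thesis unfolding eq g_def
          by (subst nn_reflect[of "\<lambda>e. ennreal (f e) * \<Psi> (uu w e)"]) auto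
      qed
    qed
    finally show "ennreal (m / Kd) * (\<integral>\<^sup>+v. \<Psi> v * indicator {p..q} v \<partial>lborel) \<le> (\<integral>\<^sup>+e. \<Psi> (uu w e) \<partial>D)" .
  qed
qed

lemma ud_bound:
  "\<exists>K2>0. \<forall>c e. \<bar>c\<bar> \<le> M \<longrightarrow> \<bar>e\<bar> \<le> T \<longrightarrow> \<bar>ud c e\<bar> \<le> K2"
proof -
  define S where "S = {-M..M} \<times> {-T..T}"
  have "compact S" unfolding S_def by (intro compact_Times compact_Icc)
  moreover have "continuous_on S (\<lambda>p. ud (fst p) (snd p))" by (rule continuous_on_subset[OF ud_cont]) simp
  ultimately have "compact ((\<lambda>p. ud (fst p) (snd p)) ` S)" by (rule compact_continuous_image[rotated])
  then have "bounded ((\<lambda>p. ud (fst p) (snd p)) ` S)" by (rule compact_imp_bounded)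
  then obtain B where B: "\<And>p. p \<in> S \<Longrightarrow> \<bar>ud (fst p) (snd p)\<bar> \<le> B"
    unfolding bounded_iff by auto
  show ?thesis
  proof (intro exI conjI allI impI)
    show "\<bar>B\<bar> + 1 > 0" by simp
    fix c e assume "\<bar>c\<bar> \<le> M" "\<bar>e\<bar> \<le> T"
    then have "(c, e) \<in> S" by (auto simp: S_def abs_le_iff)
    then show "\<bar>ud c e\<bar> \<le> \<bar>B\<bar> + 1" using B[of "(c, e)"] by simp
  qed
qed

lemma hitting:
  assumes dp: "\<delta>' > 0" and M0: "M \<ge> 0"
  shows "\<exists>p0>0. \<forall>c. \<bar>c\<bar> \<le> M \<longrightarrow> ennreal p0 \<le> emeasure D {e. \<bar>uu c e\<bar> < \<delta>'}"
proof -
  define B2 where "B2 = \<bar>\<psi>1\<bar> * M + Bg"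
  define E where "E = (B2 + 1) / \<bar>ss\<bar>"
  have B20: "B2 \<ge> 0" using M0 Bg0 by (simp add: B2_def)
  have E0: "E > 0" using B20 ss_ne by (simp add: E_def)
  have sE: "\<bar>ss\<bar> * E = B2 + 1" using ss_ne by (simp add: E_def)
  have near: "\<bar>uu c e - ss * e\<bar> \<le> B2" if "\<bar>c\<bar> \<le> M" for c e
  proof -
    have "\<bar>\<psi>1 * c\<bar> \<le> \<bar>\<psi>1\<bar> * M" using that by (simp add: abs_mult mult_left_mono)
    then show ?thesis using gf_bound[of "c + e" e] by (simp add: uu_def B2_def abs_le_iff)
  qed
  have root: "\<exists>ec. -E \<le> ec \<and> ec \<le> E \<and> uu c ec = 0" if "\<bar>c\<bar> \<le> M" for c
  proof -
    have cont: "continuous_on {-E..E} (\<lambda>e. uu c e)" by (rule continuous_on_subset[OF uu_cont1]) simp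
    have n1: "\<bar>uu c E - ss * E\<bar> \<le> B2" "\<bar>uu c (-E) - ss * (-E)\<bar> \<le> B2" using near[OF that, of E] near[OF that, of "-E"] by simp_all
    show ?thesis
    proof (cases "ss > 0")
      case True
      then have "ss * E = B2 + 1" using sE by simp
      then have "uu c (-E) \<le> 0" "0 \<le> uu c E" using n1 by (auto simp: abs_le_iff)
      then show ?thesis using IVT'[of "\<lambda>e. uu c e" "-E" 0 E, OF _ _ _ cont] E0 by auto
    next
      case False
      then have "ss < 0" using ss_ne by simp
      then have "ss * E = - (B2 + 1)" using sE by simp
      then have "uu c E \<le> 0" "0 \<le> uu c (-E)" using n1 by (auto simp: abs_le_iff)
      then show ?thesis using IVT2'[of "\<lambda>e. uu c e" E 0 "-E", OF _ _ _ cont] E0 by auto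
    qed
  qed
  obtain K2 where K20: "K2 > 0" and K2: "\<And>c e. \<bar>c\<bar> \<le> M \<Longrightarrow> \<bar>e\<bar> \<le> E + 1 \<Longrightarrow> \<bar>ud c e\<bar> \<le> K2"
    using ud_bound[of M "E + 1"] by blast
  obtain m where m0: "m > 0" and fm: "\<And>x. x \<in> {-E-1..E+1} \<Longrightarrow> m \<le> f x"
    using lsc_min[OF f_lsc f_pos, of "-E-1" "E+1"] by blast
  define r where "r = min 1 (\<delta>' / (2 * K2))"
  have r0: "r > 0" using dp K20 by (simp add: r_def)
  have r1: "r \<le> 1" by (simp add: r_def)
  have rK: "K2 * r \<le> \<delta>' / 2"
  proof -
    have "r \<le> \<delta>' / (2 * K2)" by (simp add: r_def)
    hence "K2 * r \<le> K2 * (\<delta>' / (2 * K2))" using K20 by (intro mult_left_mono) auto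
    also have "\<dots> = \<delta>' / 2" using K20 by simp
    finally show ?thesis .
  qed
  show ?thesis
  proof (intro exI conjI allI impI)
    show "m * (2 * r) > 0" using m0 r0 by simp
    fix c assume c: "\<bar>c\<bar> \<le> M"
    obtain ec where ec: "-E \<le> ec" "ec \<le> E" "uu c ec = 0" using root[OF c] by blast
    have inc: "{ec - r..ec + r} \<subseteq> {e. \<bar>uu c e\<bar> < \<delta>'}"
    proof
      fix e assume e: "e \<in> {ec - r..ec + r}"
      have bd: "\<bar>ud c x\<bar> \<le> K2" if "min e ec \<le> x" "x \<le> max e ec" for x
      proof -
        have "\<bar>x\<bar> \<le> E + 1" using that e ec r1 by (auto simp: abs_le_iff min_def max_def split: if_splits)
        then show ?thesis using K2[OF c] by blast
      qed
      have "\<bar>uu c (max e ec) - uu c (min e ec)\<bar> \<le> K2 * (max e ec - min e ec)"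
        by (rule mvt_bound) (use uu_deriv bd in auto)
      moreover have "max e ec - min e ec \<le> r" using e by auto
      ultimately have "\<bar>uu c (max e ec) - uu c (min e ec)\<bar> \<le> K2 * r"
        using K20 by (smt (verit) mult_left_mono)
      moreover have "\<bar>uu c e\<bar> = \<bar>uu c (max e ec) - uu c (min e ec)\<bar>" using ec(3)
        by (cases "e \<le> ec") (auto simp: max_def min_def)
      ultimately show "e \<in> {e. \<bar>uu c e\<bar> < \<delta>'}" using rK dp by simp
    qed
    have sub2: "{ec - r..ec + r} \<subseteq> {-E-1..E+1}" using ec r1 by auto
    have "(\<integral>\<^sup>+e. ennreal m * indicator {ec - r..ec + r} e \<partial>lborel) = ennreal m * emeasure lborel {ec - r..ec + r}"
      by (rule nn_integral_cmult_indicator) simp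
    also have "emeasure lborel {ec - r..ec + r} = ennreal (2 * r)" using r0 by simp
    finally have "ennreal (m * (2 * r)) = (\<integral>\<^sup>+e. ennreal m * indicator {ec - r..ec + r} e \<partial>lborel)"
      using m0 r0 by (simp add: ennreal_mult)
    also have "\<dots> \<le> (\<integral>\<^sup>+e. ennreal (f e) * indicator {ec - r..ec + r} e \<partial>lborel)"
    proof (rule nn_integral_mono)
      fix e show "ennreal m * indicator {ec - r..ec + r} e \<le> ennreal (f e) * indicator {ec - r..ec + r} e"
        using fm[of e] sub2 by (auto simp: indicator_def intro: ennreal_leI)
    qed
    also have "\<dots> = emeasure D {ec - r..ec + r}"
      unfolding D_def by (rule emeasure_density[symmetric]) (use f_meas in auto)
    also have "\<dots> \<le> emeasure D {e. \<bar>uu c e\<bar> < \<delta>'}"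
      by (rule emeasure_mono[OF inc]) (simp add: sets_D)
    finally show "ennreal (m * (2 * r)) \<le> emeasure D {e. \<bar>uu c e\<bar> < \<delta>'}" .
  qed
qed

end


context parnn begin

definition KD :: "real \<Rightarrow> (real \<times> real) measure" where
  "KD v = distr D borel (\<lambda>e. (v + e, e))"

lemma KD_meas[measurable]: "KD \<in> borel \<rightarrow>\<^sub>M prob_algebra borel"
  unfolding KD_def
proof (rule measurable_distr_prob_space2[where M=borel])
  show "(\<lambda>x. D) \<in> (borel :: real measure) \<rightarrow>\<^sub>M prob_algebra borel"
    using D_prob by (auto simp: space_prob_algebra sets_D)
  show "(\<lambda>(x, y). (x + y, y)) \<in> (borel :: real measure) \<Otimes>\<^sub>M (borel::real measure) \<rightarrow>\<^sub>M borel"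
    by measurable
qed

lemma KD_meas_sub[measurable]: "KD \<in> borel \<rightarrow>\<^sub>M subprob_algebra borel"
  by (rule measurable_prob_algebraD[OF KD_meas])

lemma PP_KD: "PP x = KD (hh x)" by (simp add: PP_eq KD_def)

definition Psi :: "(real \<times> real \<Rightarrow> ennreal) \<Rightarrow> real \<Rightarrow> ennreal" where
  "Psi F v = (\<integral>\<^sup>+y. F y \<partial>KD v)"

lemma Psi_meas[measurable]: "F \<in> borel_measurable borel \<Longrightarrow> Psi F \<in> borel_measurable borel"
  unfolding Psi_def[abs_def]
  by (rule measurable_compose[OF KD_meas_sub nn_integral_measurable_subprob_algebra])

lemma Psi_eq: "F \<in> borel_measurable borel \<Longrightarrow> Psi F v = (\<integral>\<^sup>+e. F (v + e, e) \<partial>D)"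
  unfolding Psi_def KD_def by (subst nn_integral_distr) (auto simp: sets_D)

lemma nn_PP: "F \<in> borel_measurable borel \<Longrightarrow> (\<integral>\<^sup>+y. F y \<partial>PP x) = Psi F (hh x)"
  by (simp add: PP_KD Psi_def)

lemma Gop_meas: "F \<in> borel_measurable borel \<Longrightarrow> (\<lambda>z. \<integral>\<^sup>+y. F y \<partial>PP z) \<in> borel_measurable borel"
  by (rule measurable_compose[OF PP_meas_sub nn_integral_measurable_subprob_algebra])

lemma nn_TI1: "(F :: real \<times> real \<Rightarrow> ennreal) \<in> borel_measurable borel \<Longrightarrow> (\<integral>\<^sup>+y. F y \<partial>TI (Suc 0) x) = (\<integral>\<^sup>+y. F y \<partial>PP x)"
  by (subst nn_TI_Suc) (auto simp: nn_integral_return Gop_meas)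

lemma nn_TI3:
  fixes F :: "real \<times> real \<Rightarrow> ennreal"
  assumes Fm[measurable]: "F \<in> borel_measurable borel"
  shows "(\<integral>\<^sup>+y. F y \<partial>TI 3 x) = (\<integral>\<^sup>+e1. \<integral>\<^sup>+e2. Psi F (uu (uu (hh x) e1) e2) \<partial>D \<partial>D)"
proof -
  define G1 where "G1 z = (\<integral>\<^sup>+y. F y \<partial>PP z)" for z
  define G2 where "G2 z = (\<integral>\<^sup>+y. G1 y \<partial>PP z)" for z
  have G1m[measurable]: "G1 \<in> borel_measurable borel" unfolding G1_def[abs_def] by (rule Gop_meas[OF Fm])
  have G2m[measurable]: "G2 \<in> borel_measurable borel" unfolding G2_def[abs_def] by (rule Gop_meas[OF G1m])
  have G1e: "G1 z = Psi F (hh z)" for z unfolding G1_def by (rule nn_PP[OF Fm])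
  have G2e: "G2 z = (\<integral>\<^sup>+e2. Psi F (uu (hh z) e2) \<partial>D)" for z
  proof -
    have "G2 z = Psi G1 (hh z)" unfolding G2_def by (rule nn_PP[OF G1m])
    also have "\<dots> = (\<integral>\<^sup>+e2. G1 (hh z + e2, e2) \<partial>D)" by (rule Psi_eq[OF G1m])
    finally show ?thesis by (simp add: G1e hh_uu)
  qed
  have e3: "(3::nat) = Suc 2" and e2: "(2::nat) = Suc 1" by simp_all
  have "(\<integral>\<^sup>+y. F y \<partial>TI 3 x) = (\<integral>\<^sup>+z. G1 z \<partial>TI 2 x)"
    unfolding G1_def e3 by (rule nn_TI_Suc[OF Fm])
  also have "\<dots> = (\<integral>\<^sup>+z. G2 z \<partial>TI 1 x)"
    unfolding G2_def e2 by (rule nn_TI_Suc[OF G1m])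
  also have "\<dots> = (\<integral>\<^sup>+z. G2 z \<partial>PP x)" using nn_TI1[OF G2m] by simp
  also have "\<dots> = Psi G2 (hh x)" by (rule nn_PP[OF G2m])
  also have "\<dots> = (\<integral>\<^sup>+e1. G2 (hh x + e1, e1) \<partial>D)" by (rule Psi_eq[OF G2m])
  also have "\<dots> = (\<integral>\<^sup>+e1. \<integral>\<^sup>+e2. Psi F (uu (uu (hh x) e1) e2) \<partial>D \<partial>D)"
    by (simp add: G2e hh_uu)
  finally show ?thesis .
qed

lemma minor_nn:
  assumes R0: "R \<ge> 0"
  shows "\<exists>\<alpha>>0. \<exists>p q. p < q \<and> (\<forall>x F. VV x \<le> R \<longrightarrow> F \<in> borel_measurable borel \<longrightarrow>
      ennreal \<alpha> * (\<integral>\<^sup>+v. Psi F v * indicator {p..q} v \<partial>lborel) \<le> (\<integral>\<^sup>+y. F y \<partial>TI 3 x))"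
proof -
  obtain \<delta>' p q \<theta> where d0: "\<delta>' > 0" and pq: "p < q" and th0: "\<theta> > 0"
    and LD: "\<And>w \<Psi>. \<bar>w\<bar> < \<delta>' \<Longrightarrow> \<Psi> \<in> borel_measurable borel \<Longrightarrow>
      ennreal \<theta> * (\<integral>\<^sup>+v. \<Psi> v * indicator {p..q} v \<partial>lborel) \<le> (\<integral>\<^sup>+e. \<Psi> (uu w e) \<partial>D)"
    using local_density by blast
  define M where "M = lam * R + Bg"
  have M0: "M \<ge> 0" using lam0 R0 Bg0 by (simp add: M_def)
  obtain p0 where p00: "p0 > 0" and HT: "\<And>c. \<bar>c\<bar> \<le> M \<Longrightarrow> ennreal p0 \<le> emeasure D {e. \<bar>uu c e\<bar> < \<delta>'}"
    using hitting[OF d0 M0] by blast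
  show ?thesis
  proof (intro exI conjI allI impI)
    show "\<theta> * p0 > 0" using th0 p00 by simp
    show "p < q" by (rule pq)
    fix x and F :: "real \<times> real \<Rightarrow> ennreal" assume Vx: "VV x \<le> R" and Fm[measurable]: "F \<in> borel_measurable borel"
    define c where "c = hh x"
    have cM: "\<bar>c\<bar> \<le> M"
    proof -
      have "\<bar>c\<bar> \<le> lam * VV x + Bg" using hh_bound by (simp add: c_def)
      also have "\<dots> \<le> M" using Vx lam0 by (simp add: M_def mult_left_mono)
      finally show ?thesis .
    qed
    define J where "J = (\<integral>\<^sup>+v. Psi F v * indicator {p..q} v \<partial>lborel)"
    define A where "A = {e. \<bar>uu c e\<bar> < \<delta>'}"
    have Am: "A \<in> sets D" unfolding A_def sets_D by measurable
    have "ennreal (\<theta> * p0) * J = ennreal p0 * (ennreal \<theta> * J)"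
      using th0 p00 by (simp add: ennreal_mult mult_ac)
    also have "\<dots> \<le> emeasure D A * (ennreal \<theta> * J)"
      using HT[OF cM] by (intro mult_right_mono) (auto simp: A_def)
    also have "\<dots> = (\<integral>\<^sup>+e1. (ennreal \<theta> * J) * indicator A e1 \<partial>D)"
      by (subst nn_integral_cmult_indicator[OF Am]) (simp add: mult.commute)
    also have "\<dots> \<le> (\<integral>\<^sup>+e1. \<integral>\<^sup>+e2. Psi F (uu (uu c e1) e2) \<partial>D \<partial>D)"
    proof (rule nn_integral_mono)
      fix e1
      show "ennreal \<theta> * J * indicator A e1 \<le> (\<integral>\<^sup>+e2. Psi F (uu (uu c e1) e2) \<partial>D)"
      proof (cases "e1 \<in> A")
        case True
        then have "\<bar>uu c e1\<bar> < \<delta>'" by (simp add: A_def)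
        then show ?thesis using LD[of "uu c e1" "Psi F"] True by (simp add: J_def)
      qed simp
    qed
    also have "\<dots> = (\<integral>\<^sup>+y. F y \<partial>TI 3 x)" by (simp add: nn_TI3[OF Fm] c_def)
    finally show "ennreal (\<theta> * p0) * (\<integral>\<^sup>+v. Psi F v * indicator {p..q} v \<partial>lborel) \<le> (\<integral>\<^sup>+y. F y \<partial>TI 3 x)"
      by (simp add: J_def)
  qed
qed

end


context parnn begin

lemma Psi_VV: "Psi (\<lambda>y. ennreal (VV y)) v \<le> ennreal (\<bar>v\<bar> + (1 + aa) * m1)"
proof -
  interpret prob_space D by (rule D_prob)
  have "Psi (\<lambda>y. ennreal (VV y)) v = (\<integral>\<^sup>+e. ennreal (VV (v + e, e)) \<partial>D)"
    by (rule Psi_eq) simp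
  also have "\<dots> \<le> (\<integral>\<^sup>+e. ennreal (\<bar>v\<bar> + (1 + aa) * \<bar>e\<bar>) \<partial>D)"
  proof (rule nn_integral_mono)
    fix e
    have "VV (v + e, e) \<le> \<bar>v\<bar> + (1 + aa) * \<bar>e\<bar>"
      unfolding VV_def by (simp add: algebra_simps abs_triangle_ineq)
    then show "ennreal (VV (v + e, e)) \<le> ennreal (\<bar>v\<bar> + (1 + aa) * \<bar>e\<bar>)" by (rule ennreal_leI)
  qed
  also have "\<dots> = ennreal (\<integral>e. \<bar>v\<bar> + (1 + aa) * \<bar>e\<bar> \<partial>D)"
    by (rule nn_integral_eq_integral[OF int_abs_D]) (use aa_pos in auto)
  also have "(\<integral>e. \<bar>v\<bar> + (1 + aa) * \<bar>e\<bar> \<partial>D) = \<bar>v\<bar> + (1 + aa) * m1"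
    using eps_mean by (simp add: m1_def prob_space)
  finally show ?thesis .
qed

lemma minorization:
  assumes R0: "R \<ge> 0"
  shows "\<exists>(\<alpha>::real) \<nu>. 0 < \<alpha> \<and> \<alpha> \<le> 1 \<and> prob_space \<nu> \<and> sets \<nu> = sets borel \<and> integrable \<nu> VV \<and>
    (\<forall>x (F :: real \<times> real \<Rightarrow> real). VV x \<le> R \<longrightarrow> F \<in> borel_measurable borel \<longrightarrow> (\<forall>y. 0 \<le> F y) \<longrightarrow>
       integrable (TI 3 x) F \<longrightarrow> integrable \<nu> F \<longrightarrow> \<alpha> * (\<integral>y. F y \<partial>\<nu>) \<le> (\<integral>y. F y \<partial>TI 3 x))"
proof -
  obtain \<alpha>0 p q where a0: "\<alpha>0 > 0" and pq: "p < q"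
    and MN: "\<And>x F. VV x \<le> R \<Longrightarrow> F \<in> borel_measurable borel \<Longrightarrow>
      ennreal \<alpha>0 * (\<integral>\<^sup>+v. Psi F v * indicator {p..q} v \<partial>lborel) \<le> (\<integral>\<^sup>+y. F y \<partial>TI 3 x)"
    using minor_nn[OF R0] by blast
  define U where "U = uniform_measure lborel {p..q}"
  have emI: "emeasure lborel {p..q} = ennreal (q - p)" using pq by simp
  have Uprob: "prob_space U" unfolding U_def
    by (rule prob_space_uniform_measure) (use pq emI in auto)
  have Usets: "sets U = sets borel" by (simp add: U_def)
  have Uin: "U \<in> space (prob_algebra borel)" using Uprob Usets by (simp add: space_prob_algebra)
  define \<nu> where "\<nu> = U \<bind> KD"
  have nuprob: "prob_space \<nu>" unfolding \<nu>_def by (rule prob_space_bind'[OF Uin KD_meas])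
  have nusets: "sets \<nu> = sets borel" unfolding \<nu>_def by (rule sets_bind'[OF Uin KD_meas])
  have KDU: "KD \<in> U \<rightarrow>\<^sub>M subprob_algebra borel"
    using KD_meas_sub measurable_cong_sets[OF Usets refl, of "subprob_algebra borel"] by metis
  have nn_nu: "(\<integral>\<^sup>+y. F y \<partial>\<nu>) = (\<integral>\<^sup>+v. Psi F v * indicator {p..q} v \<partial>lborel) / ennreal (q - p)"
    if Fm[measurable]: "F \<in> borel_measurable borel" for F :: "real \<times> real \<Rightarrow> ennreal"
  proof -
    have "(\<integral>\<^sup>+y. F y \<partial>\<nu>) = (\<integral>\<^sup>+v. Psi F v \<partial>U)"
      unfolding \<nu>_def Psi_def by (rule nn_integral_bind[OF Fm KDU])
    also have "\<dots> = (\<integral>\<^sup>+v. Psi F v * indicator {p..q} v \<partial>lborel) / emeasure lborel {p..q}"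
      unfolding U_def by (rule nn_integral_uniform_measure) auto
    finally show ?thesis using emI by simp
  qed
  define \<alpha> where "\<alpha> = min 1 (\<alpha>0 * (q - p))"
  have al0: "\<alpha> > 0" using a0 pq by (simp add: \<alpha>_def)
  have nnineq: "ennreal \<alpha> * (\<integral>\<^sup>+y. F y \<partial>\<nu>) \<le> (\<integral>\<^sup>+y. F y \<partial>TI 3 x)"
    if Vx: "VV x \<le> R" and Fm[measurable]: "F \<in> borel_measurable borel" for x and F :: "real \<times> real \<Rightarrow> ennreal"
  proof -
    define J where "J = (\<integral>\<^sup>+v. Psi F v * indicator {p..q} v \<partial>lborel)"
    have "ennreal \<alpha> * (\<integral>\<^sup>+y. F y \<partial>\<nu>) \<le> ennreal (\<alpha>0 * (q - p)) * (J / ennreal (q - p))"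
      unfolding nn_nu[OF Fm] J_def by (intro mult_right_mono ennreal_leI) (auto simp: \<alpha>_def)
    also have "\<dots> = ennreal \<alpha>0 * J"
    proof -
      have "ennreal (\<alpha>0 * (q - p)) * (J / ennreal (q - p)) = ennreal \<alpha>0 * (J * ennreal (q - p) / ennreal (q - p))"
        using a0 pq by (simp add: ennreal_mult ennreal_times_divide mult_ac)
      also have "J * ennreal (q - p) / ennreal (q - p) = J"
        using pq by (intro ennreal_mult_divide_eq) auto
      finally show ?thesis .
    qed
    also have "\<dots> \<le> (\<integral>\<^sup>+y. F y \<partial>TI 3 x)" unfolding J_def by (rule MN[OF Vx Fm])
    finally show ?thesis .
  qed
  have nuint: "integrable \<nu> VV"
  proof (rule integrableI_bounded)
    show "VV \<in> borel_measurable \<nu>" using VV_meas measurable_cong_sets[OF nusets refl, of "borel::real measure"] by metis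
    define B where "B = \<bar>p\<bar> + \<bar>q\<bar> + (1 + aa) * m1"
    have B0: "B \<ge> 0" using m10 aa_pos by (simp add: B_def)
    have "(\<integral>\<^sup>+y. ennreal (norm (VV y)) \<partial>\<nu>) = (\<integral>\<^sup>+y. ennreal (VV y) \<partial>\<nu>)" using VV0 by simp
    also have "\<dots> = (\<integral>\<^sup>+v. Psi (\<lambda>y. ennreal (VV y)) v * indicator {p..q} v \<partial>lborel) / ennreal (q - p)"
      by (rule nn_nu) simp
    also have "\<dots> \<le> (\<integral>\<^sup>+v. ennreal B * indicator {p..q} v \<partial>lborel) / ennreal (q - p)"
    proof (intro divide_right_mono_ennreal nn_integral_mono)
      fix v
      show "Psi (\<lambda>y. ennreal (VV y)) v * indicator {p..q} v \<le> ennreal B * indicator {p..q} v"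
      proof (cases "v \<in> {p..q}")
        case True
        have "\<bar>v\<bar> \<le> \<bar>p\<bar> + \<bar>q\<bar>" using True by (auto simp: abs_le_iff)
        then have "ennreal (\<bar>v\<bar> + (1 + aa) * m1) \<le> ennreal B" by (intro ennreal_leI) (simp add: B_def)
        then show ?thesis using Psi_VV[of v] True by simp
      qed simp
    qed
    also have "\<dots> = ennreal B * ennreal (q - p) / ennreal (q - p)"
      by (subst nn_integral_cmult_indicator) (use emI in auto)
    also have "\<dots> = ennreal B" using pq by (intro ennreal_mult_divide_eq) auto
    finally show "(\<integral>\<^sup>+y. ennreal (norm (VV y)) \<partial>\<nu>) < \<infinity>" by (simp add: le_less_trans)
  qed
  show ?thesis
    apply (rule exI[of _ \<alpha>], rule exI[of _ \<nu>])
  proof (intro conjI allI impI)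
    show "0 < \<alpha>" by (rule al0)
    show "\<alpha> \<le> 1" by (simp add: \<alpha>_def)
    show "prob_space \<nu>" "sets \<nu> = sets borel" "integrable \<nu> VV" by (rule nuprob, rule nusets, rule nuint)
    fix x and F :: "real \<times> real \<Rightarrow> real"
    assume Vx: "VV x \<le> R" and Fm[measurable]: "F \<in> borel_measurable borel" and Fnn: "\<forall>y. 0 \<le> F y"
      and iT: "integrable (TI 3 x) F" and inu: "integrable \<nu> F"
    have e1: "(\<integral>\<^sup>+y. ennreal (F y) \<partial>\<nu>) = ennreal (\<integral>y. F y \<partial>\<nu>)"
      by (rule nn_integral_eq_integral[OF inu]) (use Fnn in blast)
    have e2: "(\<integral>\<^sup>+y. ennreal (F y) \<partial>TI 3 x) = ennreal (\<integral>y. F y \<partial>TI 3 x)"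
      by (rule nn_integral_eq_integral[OF iT]) (use Fnn in blast)
    have Fnn': "\<And>y. 0 \<le> F y" using Fnn by blast
    have i0: "0 \<le> (\<integral>y. F y \<partial>\<nu>)" using Fnn' by (simp add: integral_nonneg_AE)
    have "ennreal (\<alpha> * (\<integral>y. F y \<partial>\<nu>)) = ennreal \<alpha> * (\<integral>\<^sup>+y. ennreal (F y) \<partial>\<nu>)"
      using al0 i0 e1 by (simp add: ennreal_mult)
    also have "\<dots> \<le> (\<integral>\<^sup>+y. ennreal (F y) \<partial>TI 3 x)" by (rule nnineq[OF Vx]) simp
    also have "\<dots> = ennreal (\<integral>y. F y \<partial>TI 3 x)" by (rule e2)
    finally have "ennreal (\<alpha> * (\<integral>y. F y \<partial>\<nu>)) \<le> ennreal (\<integral>y. F y \<partial>TI 3 x)" .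
    moreover have "0 \<le> (\<integral>y. F y \<partial>TI 3 x)" using Fnn' by (simp add: integral_nonneg_AE)
    ultimately show "\<alpha> * (\<integral>y. F y \<partial>\<nu>) \<le> (\<integral>y. F y \<partial>TI 3 x)" by (simp add: ennreal_le_iff)
  qed
qed

end


context parnn begin

lemma geo_final: "geometrically_ergodic PP"
proof -
  have "RR \<ge> 0" using KK0 gam1 by (simp add: RR_def)
  then obtain \<alpha> \<nu> where a: "0 < \<alpha>" "\<alpha> \<le> 1" "prob_space \<nu>" "sets \<nu> = sets borel" "integrable \<nu> VV"
    and m: "\<And>x (F :: real \<times> real \<Rightarrow> real). VV x \<le> RR \<Longrightarrow> F \<in> borel_measurable borel \<Longrightarrow> (\<And>y. 0 \<le> F y) \<Longrightarrow>
       integrable (TI 3 x) F \<Longrightarrow> integrable \<nu> F \<Longrightarrow> \<alpha> * (\<integral>y. F y \<partial>\<nu>) \<le> (\<integral>y. F y \<partial>TI 3 x)"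
    using minorization[of RR] by blast
  interpret p2: parnn2 \<psi>1 \<psi>2 gf gd f D Bg \<alpha> \<nu>
    by (rule parnn2.intro[OF parnn_axioms], rule parnn2_axioms.intro) (use a m in auto)
  show ?thesis by (rule p2.geo_erg)
qed

end

theorem theorem2:
  fixes k :: nat and G :: "real \<Rightarrow> real"
    and \<psi>1 \<psi>2 \<nu> :: real and \<beta> \<phi>1 \<phi>2 \<mu> :: "nat \<Rightarrow> real"
    and f :: "real \<Rightarrow> real" and D :: "real measure"
  assumes k_pos: "k \<ge> 1"
    and D_def: "D = density lborel (\<lambda>e. ennreal (f e))"
    and f_meas: "f \<in> borel_measurable borel"
    and D_prob: "prob_space D"
    and f_pos: "\<forall>e. f e > 0"
    and f_lsc: "lsc_real f"
    and G_smooth: "smooth_real G"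
    and G_bounded: "bounded (range G)"
    and G_nonconst: "\<exists>a b. G a \<noteq> G b"
    and G_asymp: "asymp_const G"
    and psi_sum: "\<psi>1 + \<psi>2 \<noteq> 0"
    and eps_mean: "integrable D (\<lambda>e. \<bar>e\<bar>)"
    and psi1: "\<bar>\<psi>1\<bar> < 1"
  shows "geometrically_ergodic
           (trans_kernel (parnn_step \<psi>1 \<psi>2 (parnn_g G k \<nu> \<beta> \<phi>1 \<phi>2 \<mu>)) D)"
proof -
  obtain Dd where Dd0: "Dd 0 = G" and Dd: "\<And>n x. (Dd n has_real_derivative Dd (Suc n) x) (at x)"
    using G_smooth unfolding smooth_real_def by blast
  have Ddc: "continuous_on UNIV (Dd n)" for n
    by (rule continuous_at_imp_continuous_on) (use Dd DERIV_isCont in blast)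
  obtain Gm where Gm: "\<And>x. \<bar>G x\<bar> \<le> Gm"
    using G_bounded unfolding bounded_iff by auto
  define gf where "gf = parnn_g G k \<nu> \<beta> \<phi>1 \<phi>2 \<mu>"
  define gd where "gd w t = (\<Sum>i=1..k. \<beta> i * (Dd 1 (\<phi>1 i * (w + t) + \<phi>2 i * t + \<mu> i) * (\<phi>1 i + \<phi>2 i)))" for w t
  define Bg where "Bg = \<bar>\<nu>\<bar> + (\<Sum>i=1..k. \<bar>\<beta> i\<bar> * Gm)"
  have G0: "G = Dd 0" by (simp add: Dd0)
  interpret parnn \<psi>1 \<psi>2 gf gd f D Bg
  proof (rule parnn.intro)
    show "D = density lborel (\<lambda>e. ennreal (f e))" by (rule D_def)
    show "f \<in> borel_measurable borel" by (rule f_meas)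
    show "prob_space D" by (rule D_prob)
    show "\<And>e. f e > 0" using f_pos by blast
    show "lsc_real f" by (rule f_lsc)
    show "\<psi>1 + \<psi>2 \<noteq> 0" by (rule psi_sum)
    show "integrable D (\<lambda>e. \<bar>e\<bar>)" by (rule eps_mean)
    show "\<bar>\<psi>1\<bar> < 1" by (rule psi1)
    show "continuous_on UNIV (\<lambda>p. gf (fst p) (snd p))"
      unfolding gf_def parnn_g_def G0
      by (intro continuous_intros continuous_on_compose2[OF Ddc]) auto
    show "\<bar>gf y e\<bar> \<le> Bg" for y e
    proof -
      have "\<bar>\<Sum>i=1..k. \<beta> i * G (\<phi>1 i * y + \<phi>2 i * e + \<mu> i)\<bar> \<le> (\<Sum>i=1..k. \<bar>\<beta> i * G (\<phi>1 i * y + \<phi>2 i * e + \<mu> i)\<bar>)"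
        by (rule sum_abs)
      also have "\<dots> \<le> (\<Sum>i=1..k. \<bar>\<beta> i\<bar> * Gm)"
        by (intro sum_mono) (simp add: abs_mult mult_left_mono Gm)
      finally show ?thesis unfolding gf_def parnn_g_def Bg_def by (smt (verit))
    qed
    show "((\<lambda>t. gf (w + t) t) has_real_derivative gd w t) (at t)" for w t
    proof -
      have inner: "((\<lambda>z. \<phi>1 i * (w + z) + \<phi>2 i * z + \<mu> i) has_real_derivative (\<phi>1 i + \<phi>2 i)) (at t)" for i
        by (auto intro!: derivative_eq_intros)
      have trm: "((\<lambda>z. \<beta> i * Dd 0 (\<phi>1 i * (w + z) + \<phi>2 i * z + \<mu> i)) has_real_derivative
          \<beta> i * (Dd 1 (\<phi>1 i * (w + t) + \<phi>2 i * t + \<mu> i) * (\<phi>1 i + \<phi>2 i))) (at t)" for i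
      proof -
        have d: "(Dd 0 has_real_derivative Dd 1 y) (at y)" for y using Dd[of 0 y] by simp
        show ?thesis by (rule DERIV_cmult[OF DERIV_chain2[OF d inner]])
      qed
      have "((\<lambda>t. \<nu> + (\<Sum>i=1..k. \<beta> i * Dd 0 (\<phi>1 i * (w + t) + \<phi>2 i * t + \<mu> i))) has_real_derivative
          0 + (\<Sum>i=1..k. \<beta> i * (Dd 1 (\<phi>1 i * (w + t) + \<phi>2 i * t + \<mu> i) * (\<phi>1 i + \<phi>2 i)))) (at t)"
        by (rule DERIV_add[OF DERIV_const DERIV_sum]) (rule trm)
      then show ?thesis unfolding gf_def parnn_g_def gd_def G0 by simp
    qed
    show "continuous_on UNIV (\<lambda>p. gd (fst p) (snd p))"
      unfolding gd_def
      by (intro continuous_intros continuous_on_compose2[OF Ddc]) auto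
  qed
  have "geometrically_ergodic PP" by (rule geo_final)
  then show ?thesis using PP_def unfolding gf_def by simp
qed


end
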